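(* Let $T:\mathbb C_n[z]\to\mathbb C_m[z]$ be linear with $m=\max\{\deg T(f):f\in\mathbb C_n[z]\}$. Let $C=\Phi^{-1}(H)$ be an open circular domain, $\Phi(z)=\frac{az+b}{cz+d}$, $ad-bc\neq0$ (with $c=0$ if $C$ is a half-plane), and let $S=\phi_m^{-1}T\phi_n:\mathbb C_n[z]\to\mathbb C_m[z]$. The following are equivalent: (i) $T(f)$ is $C$-stable or zero whenever $f$ has degree $n$ and is $C$-stable; (ii) $S(f)$ is $H$-stable or zero whenever $f$ has degree $n$ and is $H$-stable; (iii) $S(f)$ is $H$-stable or zero whenever $f$ has degree at most $n$ and is $H$-stable. Moreover the following are equivalent: (iv) $T(f)\in\pi(\partial C)\cup\{0\}$ whenever $f$ has degree $n$ and $f\in\pi(\partial C)$; (v) $S(f)\in\pi(\mathbb R)\cup\{0\}$ whenever $f$ has degree $n$ and $f\in\pi(\mathbb R)$; (vi) $S(f)\in\pi(\mathbb R)\cup\{0\}$ whenever $f$ has degree at most $n$ and $f\in\pi(\mathbb R)$.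
   Context: $H=\{\Im z>0\}$; an open circular domain is the image of $H$ under a Möbius transformation. For $\Omega\subseteq\mathbb C$, a univariate polynomial is $\Omega$-stable if it is non-zero and has no zeros in $\Omega$, and $\pi(\Omega)$ is the set of non-zero univariate polynomials all of whose zeros lie in $\Omega$. For $k\in\mathbb N$, $\phi_k:\mathbb C_k[z]\to\mathbb C_k[z]$ is the invertible linear map $\phi_k(f)(z)=(cz+d)^kf(\Phi(z))$. *)

theory Defs
  imports "HOL-Analysis.Analysis" "HOL-Computational_Algebra.Polynomial"
begin

definition upper_half_plane :: "complex set" where
  "upper_half_plane = {z. Im z > 0}"

definition circ_dom :: "complex \<Rightarrow> complex \<Rightarrow> complex \<Rightarrow> complex \<Rightarrow> complex set" where
  "circ_dom a b c d = {z. c * z + d \<noteq> 0 \<and> Im ((a * z + b) / (c * z + d)) > 0}"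

definition is_open_halfplane :: "complex set \<Rightarrow> bool" where
  "is_open_halfplane A \<longleftrightarrow> (\<exists>w r. w \<noteq> 0 \<and> A = {z. Im (w * z) > r})"

definition stable_on :: "complex set \<Rightarrow> complex poly \<Rightarrow> bool" where
  "stable_on \<Omega> f \<longleftrightarrow> f \<noteq> 0 \<and> (\<forall>z\<in>\<Omega>. poly f z \<noteq> 0)"

definition zeros_in :: "complex set \<Rightarrow> complex poly set" where
  "zeros_in \<Omega> = {f. f \<noteq> 0 \<and> (\<forall>z. poly f z = 0 \<longrightarrow> z \<in> \<Omega>)}"

text \<open>phi_k(f)(z) = (cz+d)^k f((az+b)/(cz+d)), written out for f of degree at most k.\<close>
definition phi :: "nat \<Rightarrow> complex \<Rightarrow> complex \<Rightarrow> complex \<Rightarrow> complex \<Rightarrow> complex poly \<Rightarrow> complex poly" where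
  "phi k a b c d f = (\<Sum>j\<le>k. smult (coeff f j) ([:b, a:] ^ j * [:d, c:] ^ (k - j)))"

definition phi_inv :: "nat \<Rightarrow> complex \<Rightarrow> complex \<Rightarrow> complex \<Rightarrow> complex \<Rightarrow> complex poly \<Rightarrow> complex poly" where
  "phi_inv k a b c d = inv_into {p. degree p \<le> k} (phi k a b c d)"

end

theory Submission
  imports Defs "HOL-Complex_Analysis.Great_Picard"
begin

lemma phi_add: "phi k a b c d (f + g) = phi k a b c d f + phi k a b c d g"
  by (simp add: phi_def smult_add_left sum.distrib)

lemma phi_smult: "phi k a b c d (smult s f) = smult s (phi k a b c d f)"
  by (rule poly_eqI) (simp add: phi_def coeff_sum sum_distrib_left mult.assoc)

lemma phi_diff: "phi k a b c d (f - g) = phi k a b c d f - phi k a b c d g"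
  by (simp add: phi_def smult_diff_left sum_subtractf)

lemma phi_zero[simp]: "phi k a b c d 0 = 0"
  by (simp add: phi_def)

lemma degree_phi: "degree (phi k a b c d f) \<le> k"
  unfolding phi_def
proof (rule degree_sum_le)
  fix j assume j: "j \<in> {..k}"
  have "degree (smult (coeff f j) ([:b, a:] ^ j * [:d, c:] ^ (k - j)))
      \<le> degree ([:b, a:] ^ j * [:d, c:] ^ (k - j))" by (rule degree_smult_le)
  also have "\<dots> \<le> degree ([:b, a:] ^ j) + degree ([:d, c:] ^ (k - j))" by (rule degree_mult_le)
  also have "\<dots> \<le> degree [:b, a:] * j + degree [:d, c:] * (k - j)"
    by (intro add_mono degree_power_le)
  also have "\<dots> \<le> 1 * j + 1 * (k - j)"
    by (intro add_mono mult_right_mono) auto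
  also have "\<dots> = k" using j by simp
  finally show "degree (smult (coeff f j) ([:b, a:] ^ j * [:d, c:] ^ (k - j))) \<le> k" .
qed simp

lemma poly_sum_le:
  fixes f :: "complex poly"
  assumes "degree f \<le> k" shows "poly f w = (\<Sum>j\<le>k. coeff f j * w ^ j)"
proof -
  have "poly f w = (\<Sum>j\<le>degree f. coeff f j * w ^ j)" by (rule poly_altdef)
  also have "\<dots> = (\<Sum>j\<le>k. coeff f j * w ^ j)"
    by (rule sum.mono_neutral_left) (use assms in \<open>auto simp: coeff_eq_0\<close>)
  finally show ?thesis .
qed

lemma poly_phi:
  assumes "degree f \<le> k" "c * z + d \<noteq> 0"
  shows "poly (phi k a b c d f) z = (c * z + d) ^ k * poly f ((a * z + b) / (c * z + d))"
proof -
  have "poly (phi k a b c d f) z = (\<Sum>j\<le>k. coeff f j * ((a * z + b) ^ j * (c * z + d) ^ (k - j)))"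
    by (simp add: phi_def poly_sum algebra_simps)
  also have "\<dots> = (\<Sum>j\<le>k. (c * z + d) ^ k * (coeff f j * ((a * z + b) / (c * z + d)) ^ j))"
  proof (rule sum.cong)
    fix j assume "j \<in> {..k}"
    then have "(c * z + d) ^ k = (c * z + d) ^ j * (c * z + d) ^ (k - j)"
      by (simp flip: power_add)
    then show "coeff f j * ((a * z + b) ^ j * (c * z + d) ^ (k - j)) =
        (c * z + d) ^ k * (coeff f j * ((a * z + b) / (c * z + d)) ^ j)"
      using assms(2) by (simp add: power_divide field_simps)
  qed simp
  also have "\<dots> = (c * z + d) ^ k * poly f ((a * z + b) / (c * z + d))"
    by (simp add: sum_distrib_left poly_sum_le[OF assms(1)] power_mult_distrib mult_ac)
  finally show ?thesis .
qed

lemma poly_phi_pole: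
  assumes "c * z + d = 0"
  shows "poly (phi k a b c d f) z = coeff f k * (a * z + b) ^ k"
proof -
  have "poly (phi k a b c d f) z = (\<Sum>j\<le>k. coeff f j * ((a * z + b) ^ j * (c * z + d) ^ (k - j)))"
    by (simp add: phi_def poly_sum algebra_simps)
  also have "\<dots> = (\<Sum>j\<le>k. if j = k then coeff f k * (a * z + b) ^ k else 0)"
    by (rule sum.cong) (auto simp: assms)
  also have "\<dots> = coeff f k * (a * z + b) ^ k" by simp
  finally show ?thesis .
qed

lemma coeff_mult_le_sum:
  fixes p q :: "complex poly"
  assumes "degree p \<le> m" "degree q \<le> l"
  shows "coeff (p * q) (m + l) = coeff p m * coeff q l"
proof (cases "degree p = m \<and> degree q = l")
  case True
  then show ?thesis using coeff_mult_degree_sum[of p q] by simp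
next
  case False
  then have "degree p < m \<or> degree q < l" using assms by auto
  moreover have "degree (p * q) \<le> degree p + degree q" by (rule degree_mult_le)
  ultimately have "degree (p * q) < m + l" using assms by linarith
  then have "coeff (p * q) (m + l) = 0" by (simp add: coeff_eq_0)
  moreover have "coeff p m = 0 \<or> coeff q l = 0"
    using \<open>degree p < m \<or> degree q < l\<close> by (auto simp: coeff_eq_0)
  ultimately show ?thesis by auto
qed

lemma coeff_top_prod:
  fixes a b c d :: complex
  assumes "j \<le> k"
  shows "coeff ([:b, a:] ^ j * [:d, c:] ^ (k - j)) k = a ^ j * c ^ (k - j)"
proof -
  have e1: "degree [:b, a:] \<le> 1" by (cases "a = 0") auto
  have e2: "degree [:d, c:] \<le> 1" by (cases "c = 0") auto
  have d1: "degree ([:b, a:] ^ j) \<le> j"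
    using degree_power_le[of "[:b, a:]" j] mult_right_mono[OF e1, of j] by linarith
  have d2: "degree ([:d, c:] ^ (k - j)) \<le> k - j"
    using degree_power_le[of "[:d, c:]" "k - j"] mult_right_mono[OF e2, of "k - j"] by linarith
  have "coeff ([:b, a:] ^ j * [:d, c:] ^ (k - j)) (j + (k - j)) = coeff ([:b, a:] ^ j) j * coeff ([:d, c:] ^ (k - j)) (k - j)"
    by (rule coeff_mult_le_sum[OF d1 d2])
  then show ?thesis using assms by (simp add: coeff_linear_poly_power)
qed

lemma coeff_phi_top: "coeff (phi k a b c d f) k = (\<Sum>j\<le>k. coeff f j * (a ^ j * c ^ (k - j)))"
  by (simp add: phi_def coeff_sum coeff_top_prod)

lemma den_ne:
  fixes a b c d z :: complex
  assumes "a * d - b * c \<noteq> 0" "z \<noteq> - d / c"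
  shows "c * z + d \<noteq> 0"
proof (cases "c = 0")
  case True
  then show ?thesis using assms by auto
next
  case False
  show ?thesis
  proof
    assume "c * z + d = 0"
    then have "z = - d / c" using False by (simp add: field_simps add_eq_0_iff)
    then show False using assms by simp
  qed
qed

lemma poly_eq_cofinite:
  fixes p q :: "complex poly"
  assumes "\<And>z. z \<noteq> z0 \<Longrightarrow> poly p z = poly q z"
  shows "p = q"
proof (rule ccontr)
  assume "p \<noteq> q"
  then have "p - q \<noteq> 0" by simp
  then have fin: "finite {z. poly (p - q) z = 0}" by (rule poly_roots_finite)
  have "UNIV - {z0} \<subseteq> {z. poly (p - q) z = 0}" using assms by auto
  then have "finite (UNIV - {z0} :: complex set)" using fin finite_subset by blast
  then have "finite (UNIV :: complex set)" by simp
  then show False using infinite_UNIV_char_0 by blast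
qed

lemma mob_back:
  fixes a b c d z :: complex
  assumes det: "a * d - b * c \<noteq> 0" and cz: "c * z + d \<noteq> 0"
  shows "(- c) * ((a * z + b) / (c * z + d)) + a = (a * d - b * c) / (c * z + d)"
    and "(d * ((a * z + b) / (c * z + d)) + - b) / ((- c) * ((a * z + b) / (c * z + d)) + a) = z"
proof -
  show 1: "(- c) * ((a * z + b) / (c * z + d)) + a = (a * d - b * c) / (c * z + d)"
    using cz by (simp add: field_simps)
  have n: "d * ((a * z + b) / (c * z + d)) + - b = (a * d - b * c) * z / (c * z + d)"
    using cz by (simp add: field_simps)
  have gen: "\<And>X Y z :: complex. X \<noteq> 0 \<Longrightarrow> Y \<noteq> 0 \<Longrightarrow> (X * z / Y) / (X / Y) = z"
    by (simp add: field_simps)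
  have "((a * d - b * c) * z / (c * z + d)) / ((a * d - b * c) / (c * z + d)) = z"
    by (rule gen[OF det cz])
  then show "(d * ((a * z + b) / (c * z + d)) + - b) / ((- c) * ((a * z + b) / (c * z + d)) + a) = z"
    by (simp only: n 1)
qed

lemma phi_psi:
  fixes a b c d :: complex and f :: "complex poly"
  assumes det: "a * d - b * c \<noteq> 0" and deg: "degree f \<le> k"
  shows "phi k a b c d (phi k d (- b) (- c) a f) = smult ((a * d - b * c) ^ k) f"
proof (rule poly_eq_cofinite[of "- d / c"])
  fix z :: complex assume "z \<noteq> - d / c"
  then have cz: "c * z + d \<noteq> 0" using den_ne[OF det] by blast
  define w where "w = (a * z + b) / (c * z + d)"
  have w1: "(- c) * w + a = (a * d - b * c) / (c * z + d)" unfolding w_def by (rule mob_back(1)[OF det cz])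
  have w2: "(d * w + - b) / ((- c) * w + a) = z" unfolding w_def by (rule mob_back(2)[OF det cz])
  have w1ne: "(- c) * w + a \<noteq> 0" using w1 det cz by simp
  have "poly (phi k a b c d (phi k d (- b) (- c) a f)) z
      = (c * z + d) ^ k * poly (phi k d (- b) (- c) a f) w"
    unfolding w_def by (rule poly_phi[OF degree_phi cz])
  also have "poly (phi k d (- b) (- c) a f) w = ((- c) * w + a) ^ k * poly f ((d * w + - b) / ((- c) * w + a))"
    by (rule poly_phi[OF deg w1ne])
  also have "(c * z + d) ^ k * (((- c) * w + a) ^ k * poly f ((d * w + - b) / ((- c) * w + a)))
      = (c * z + d) ^ k * (((a * d - b * c) / (c * z + d)) ^ k * poly f z)"
    by (subst w2, subst w1, rule refl)
  also have "\<dots> = (a * d - b * c) ^ k * poly f z"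
    using cz by (simp add: power_divide)
  finally show "poly (phi k a b c d (phi k d (- b) (- c) a f)) z = poly (smult ((a * d - b * c) ^ k) f) z"
    by simp
qed

lemma phi_psi':
  fixes a b c d :: complex and f :: "complex poly"
  assumes det: "a * d - b * c \<noteq> 0" and deg: "degree f \<le> k"
  shows "phi k d (- b) (- c) a (phi k a b c d f) = smult ((a * d - b * c) ^ k) f"
proof -
  have det': "d * a - (- b) * (- c) \<noteq> 0" using det by (simp add: mult.commute)
  have "phi k d (- b) (- c) a (phi k a (- (- b)) (- (- c)) d f) = smult ((d * a - (- b) * (- c)) ^ k) f"
    by (rule phi_psi[OF det' deg])
  then show ?thesis by (simp add: mult.commute)
qed

lemma phi_inj:
  fixes a b c d :: complex and f g :: "complex poly"
  assumes det: "a * d - b * c \<noteq> 0" and "degree f \<le> k" "degree g \<le> k"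
    and eq: "phi k a b c d f = phi k a b c d g"
  shows "f = g"
proof -
  have "smult ((a * d - b * c) ^ k) f = smult ((a * d - b * c) ^ k) g"
    using phi_psi'[OF det assms(2)] phi_psi'[OF det assms(3)] eq by simp
  moreover have "(a * d - b * c) ^ k \<noteq> 0" using det by simp
  ultimately show ?thesis by (metis smult_smult left_inverse smult_1_left)
qed

lemma phi_eq0_iff:
  fixes a b c d :: complex and f :: "complex poly"
  assumes det: "a * d - b * c \<noteq> 0" and "degree f \<le> k"
  shows "phi k a b c d f = 0 \<longleftrightarrow> f = 0"
  using phi_inj[OF det assms(2), of 0] by auto

lemma phi_surj:
  fixes a b c d :: complex and f :: "complex poly"
  assumes det: "a * d - b * c \<noteq> 0" and deg: "degree f \<le> k"
  shows "f \<in> phi k a b c d ` {p. degree p \<le> k}"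
proof -
  define g where "g = smult (1 / (a * d - b * c) ^ k) (phi k d (- b) (- c) a f)"
  have "degree g \<le> k" unfolding g_def using degree_phi degree_smult_le order_trans by blast
  moreover have "phi k a b c d g = f"
    unfolding g_def phi_smult phi_psi[OF det deg] using det by simp
  ultimately show ?thesis by force
qed

lemma phi_inj_on:
  fixes a b c d :: complex
  assumes det: "a * d - b * c \<noteq> 0"
  shows "inj_on (phi k a b c d) {p. degree p \<le> k}"
  using phi_inj[OF det] by (auto intro: inj_onI)

lemma phi_inv_phi:
  fixes a b c d :: complex and g :: "complex poly"
  assumes det: "a * d - b * c \<noteq> 0" and deg: "degree g \<le> k"
  shows "phi_inv k a b c d (phi k a b c d g) = g"
  unfolding phi_inv_def using inv_into_f_f[OF phi_inj_on[OF det]] deg by auto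

lemma phi_phi_inv:
  fixes a b c d :: complex and f :: "complex poly"
  assumes det: "a * d - b * c \<noteq> 0" and deg: "degree f \<le> k"
  shows "phi k a b c d (phi_inv k a b c d f) = f" "degree (phi_inv k a b c d f) \<le> k"
proof -
  show "phi k a b c d (phi_inv k a b c d f) = f"
    unfolding phi_inv_def by (rule f_inv_into_f[OF phi_surj[OF det deg]])
  have "phi_inv k a b c d f \<in> {p. degree p \<le> k}"
    unfolding phi_inv_def by (rule inv_into_into[OF phi_surj[OF det deg]])
  then show "degree (phi_inv k a b c d f) \<le> k" by simp
qed

definition cconv :: "(nat \<Rightarrow> complex poly) \<Rightarrow> complex poly \<Rightarrow> bool" where
  "cconv G g \<longleftrightarrow> (\<forall>i. (\<lambda>k. coeff (G k) i) \<longlonglongrightarrow> coeff g i)"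

lemma cconv_const: "cconv (\<lambda>k. p) p"
  by (simp add: cconv_def)

lemma cconv_mult:
  assumes "cconv P p" "cconv Q q"
  shows "cconv (\<lambda>k. P k * Q k) (p * q)"
  using assms unfolding cconv_def coeff_mult
  by (intro allI tendsto_sum tendsto_mult) auto

lemma cconv_power:
  assumes "cconv P p"
  shows "cconv (\<lambda>k. P k ^ n) (p ^ n)"
  by (induction n) (auto intro: cconv_mult cconv_const assms simp del: power_Suc simp: power_Suc)

lemma cconv_pCons2:
  assumes "B \<longlonglongrightarrow> b" "A \<longlonglongrightarrow> a"
  shows "cconv (\<lambda>k. [:B k, A k:]) [:b, a:]"
  unfolding cconv_def
proof
  fix i show "(\<lambda>k. coeff [:B k, A k:] i) \<longlonglongrightarrow> coeff [:b, a:] i"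
    using assms by (cases i; cases "i - 1") (auto simp: coeff_pCons split: nat.splits)
qed

lemma cconv_smult:
  assumes "A \<longlonglongrightarrow> a" "cconv P p"
  shows "cconv (\<lambda>k. smult (A k) (P k)) (smult a p)"
  using assms unfolding cconv_def by (auto intro: tendsto_mult)

lemma cconv_sum:
  assumes "\<And>j. j \<in> I \<Longrightarrow> cconv (\<lambda>k. F k j) (f j)"
  shows "cconv (\<lambda>k. \<Sum>j\<in>I. F k j) (\<Sum>j\<in>I. f j)"
  using assms unfolding cconv_def coeff_sum by (auto intro: tendsto_sum)

lemma cconv_phi:
  assumes "cconv G g" "A \<longlonglongrightarrow> a" "B \<longlonglongrightarrow> b" "C \<longlonglongrightarrow> c" "D \<longlonglongrightarrow> d"
  shows "cconv (\<lambda>k. phi n (A k) (B k) (C k) (D k) (G k)) (phi n a b c d g)"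
  unfolding phi_def
proof (rule cconv_sum)
  fix j
  have "(\<lambda>k. coeff (G k) j) \<longlonglongrightarrow> coeff g j" using assms(1) by (simp add: cconv_def)
  then show "cconv (\<lambda>k. smult (coeff (G k) j) ([:B k, A k:] ^ j * [:D k, C k:] ^ (n - j)))
      (smult (coeff g j) ([:b, a:] ^ j * [:d, c:] ^ (n - j)))"
    using assms by (intro cconv_smult cconv_mult cconv_power cconv_pCons2)
qed

lemma lin_sum:
  fixes L :: "complex poly \<Rightarrow> complex"
  assumes add: "\<And>f g. degree f \<le> n \<Longrightarrow> degree g \<le> n \<Longrightarrow> L (f + g) = L f + L g"
    and sm: "\<And>f s. degree f \<le> n \<Longrightarrow> L (smult s f) = s * L f"
    and fin: "finite A" and deg: "\<And>j. j \<in> A \<Longrightarrow> degree (p j) \<le> n"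
  shows "L (\<Sum>j\<in>A. smult (cf j) (p j)) = (\<Sum>j\<in>A. cf j * L (p j))
         \<and> degree (\<Sum>j\<in>A. smult (cf j) (p j)) \<le> n"
  using fin deg
proof (induction A rule: finite_induct)
  case empty
  have "L 0 = L (smult 0 0)" by simp
  also have "\<dots> = 0" using sm[of 0 0] by simp
  finally show ?case by simp
next
  case (insert x F)
  have dx: "degree (smult (cf x) (p x)) \<le> n"
    using insert.prems degree_smult_le order_trans by blast
  have IH: "L (\<Sum>j\<in>F. smult (cf j) (p j)) = (\<Sum>j\<in>F. cf j * L (p j))"
     "degree (\<Sum>j\<in>F. smult (cf j) (p j)) \<le> n"
    using insert.IH insert.prems by auto
  have "L (\<Sum>j\<in>insert x F. smult (cf j) (p j)) = L (smult (cf x) (p x)) + L (\<Sum>j\<in>F. smult (cf j) (p j))"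
    using insert.hyps add[OF dx IH(2)] by simp
  also have "\<dots> = (\<Sum>j\<in>insert x F. cf j * L (p j))"
    using insert.hyps insert.prems IH(1) sm by simp
  moreover have "degree (\<Sum>j\<in>insert x F. smult (cf j) (p j)) \<le> n"
    using insert.hyps degree_add_le[OF dx IH(2)] by simp
  ultimately show ?case by simp
qed

lemma monom_sum:
  fixes h :: "complex poly"
  assumes "degree h \<le> n"
  shows "h = (\<Sum>j\<le>n. smult (coeff h j) (monom 1 j))"
  using poly_as_sum_of_monoms'[OF assms] by (simp add: smult_monom)

lemma lin_expand:
  fixes L :: "complex poly \<Rightarrow> complex"
  assumes add: "\<And>f g. degree f \<le> n \<Longrightarrow> degree g \<le> n \<Longrightarrow> L (f + g) = L f + L g"
    and sm: "\<And>f s. degree f \<le> n \<Longrightarrow> L (smult s f) = s * L f"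
    and "degree h \<le> n"
  shows "L h = (\<Sum>j\<le>n. coeff h j * L (monom 1 j))"
proof -
  have dm: "\<And>j. j \<in> {..n} \<Longrightarrow> degree (monom (1::complex) j) \<le> n"
    by (simp add: degree_monom_eq)
  have "L h = L (\<Sum>j\<le>n. smult (coeff h j) (monom 1 j))" using monom_sum[OF assms(3)] by simp
  also have "\<dots> = (\<Sum>j\<le>n. coeff h j * L (monom 1 j))"
    using lin_sum[where n=n and L=L and A="{..n}" and p="\<lambda>j. monom 1 j" and cf="\<lambda>j. coeff h j", OF add sm finite_atMost dm] by simp
  finally show ?thesis .
qed

lemma lin_cconv:
  fixes U :: "complex poly \<Rightarrow> complex poly"
  assumes add: "\<And>f g. degree f \<le> n \<Longrightarrow> degree g \<le> n \<Longrightarrow> U (f + g) = U f + U g"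
    and sm: "\<And>f s. degree f \<le> n \<Longrightarrow> U (smult s f) = smult s (U f)"
    and degG: "\<And>k. degree (G k) \<le> n" and degg: "degree g \<le> n" and cc: "cconv G g"
  shows "cconv (\<lambda>k. U (G k)) (U g)"
  unfolding cconv_def
proof
  fix i
  define L where "L = (\<lambda>h. coeff (U h) i)"
  have addL: "\<And>f g. degree f \<le> n \<Longrightarrow> degree g \<le> n \<Longrightarrow> L (f + g) = L f + L g"
    unfolding L_def using add by simp
  have smL: "\<And>f s. degree f \<le> n \<Longrightarrow> L (smult s f) = s * L f"
    unfolding L_def using sm by simp
  have e: "\<And>h. degree h \<le> n \<Longrightarrow> L h = (\<Sum>j\<le>n. coeff h j * L (monom 1 j))"
    by (rule lin_expand[OF addL smL])
  have "(\<lambda>k. \<Sum>j\<le>n. coeff (G k) j * L (monom 1 j)) \<longlonglongrightarrow> (\<Sum>j\<le>n. coeff g j * L (monom 1 j))"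
    using cc unfolding cconv_def by (intro tendsto_sum tendsto_mult) auto
  then show "(\<lambda>k. coeff (U (G k)) i) \<longlonglongrightarrow> coeff (U g) i"
    using e[OF degG] e[OF degg] unfolding L_def by simp
qed

lemma poly_holo: "poly p holomorphic_on S"
proof -
  have "poly p = (\<lambda>z. \<Sum>i\<le>degree p. coeff p i * z ^ i)"
    by (rule ext) (simp add: poly_altdef)
  then show ?thesis by (simp add: holomorphic_intros)
qed

lemma cconv_uniform:
  assumes cc: "cconv G p" and dG: "\<And>k. degree (G k) \<le> M" and dp: "degree p \<le> M" and K: "compact K"
  shows "uniform_limit K (\<lambda>k. poly (G k)) (poly p) sequentially"
proof -
  obtain B where B: "B > 0" "\<And>z. z \<in> K \<Longrightarrow> norm z \<le> B"
    using compact_imp_bounded[OF K] unfolding bounded_pos by blast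
  define e where "e = (\<lambda>k. \<Sum>i\<le>M. norm (coeff (G k) i - coeff p i) * B ^ i)"
  have "e \<longlonglongrightarrow> (\<Sum>i\<le>M. 0 * B ^ i)"
    unfolding e_def using cc unfolding cconv_def
    by (intro tendsto_sum tendsto_mult tendsto_const tendsto_norm_zero LIM_zero) auto
  then have e0: "e \<longlonglongrightarrow> 0" by simp
  show ?thesis
  proof (rule uniform_limitI)
    fix eps :: real assume "0 < eps"
    then have ev: "eventually (\<lambda>k. e k < eps) sequentially"
      using order_tendstoD(2)[OF e0] by blast
    show "eventually (\<lambda>k. \<forall>z\<in>K. dist (poly (G k) z) (poly p z) < eps) sequentially"
    proof (rule eventually_mono[OF ev], intro ballI)
      fix k z assume ek: "e k < eps" and z: "z \<in> K"
      have "dist (poly (G k) z) (poly p z) = norm (\<Sum>i\<le>M. (coeff (G k) i - coeff p i) * z ^ i)"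
        by (simp add: dist_norm poly_sum_le[OF dG] poly_sum_le[OF dp] sum_subtractf left_diff_distrib)
      also have "\<dots> \<le> (\<Sum>i\<le>M. norm ((coeff (G k) i - coeff p i) * z ^ i))"
        by (rule norm_sum)
      also have "\<dots> \<le> e k"
        unfolding e_def
      proof (rule sum_mono)
        fix i
        have "norm (z ^ i) \<le> B ^ i" using B(2)[OF z] by (simp add: norm_power power_mono)
        then show "norm ((coeff (G k) i - coeff p i) * z ^ i) \<le> norm (coeff (G k) i - coeff p i) * B ^ i"
          by (simp add: norm_mult mult_left_mono)
      qed
      finally show "dist (poly (G k) z) (poly p z) < eps" using ek by simp
    qed
  qed
qed

lemma hurwitz_poly:
  assumes op: "open \<Omega>" and cn: "connected \<Omega>" and cc: "cconv G p"
    and dG: "\<And>k. degree (G k) \<le> M" and dp: "degree p \<le> M"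
    and nz: "\<And>k z. z \<in> \<Omega> \<Longrightarrow> poly (G k) z \<noteq> 0" and p0: "p \<noteq> 0" and z0: "z0 \<in> \<Omega>"
  shows "poly p z0 \<noteq> 0"
proof (cases "poly p constant_on \<Omega>")
  case True
  show ?thesis
  proof
    assume pz: "poly p z0 = 0"
    then have "\<Omega> \<subseteq> {z. poly p z = 0}" using True z0 unfolding constant_on_def by auto
    then have "finite \<Omega>" using poly_roots_finite[OF p0] finite_subset by blast
    then have "\<Omega> = {}" using finite_imp_not_open op by blast
    then show False using z0 by simp
  qed
next
  case False
  show ?thesis
    by (rule Hurwitz_no_zeros[OF op cn, of "\<lambda>k. poly (G k)"])
       (use poly_holo cconv_uniform[OF cc dG dp] False nz z0 in auto)
qed

lemma hurwitz_poly0: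
  assumes op: "open \<Omega>" and cn: "connected \<Omega>" and cc: "cconv G p"
    and dG: "\<And>k. degree (G k) \<le> M" and dp: "degree p \<le> M"
    and nz: "\<And>k. G k = 0 \<or> (\<forall>z\<in>\<Omega>. poly (G k) z \<noteq> 0)"
  shows "p = 0 \<or> (\<forall>z\<in>\<Omega>. poly p z \<noteq> 0)"
proof (cases "p = 0")
  case False
  then obtain i where i: "coeff p i \<noteq> 0" by (meson leading_coeff_neq_0)
  have "(\<lambda>k. coeff (G k) i) \<longlonglongrightarrow> coeff p i" using cc by (simp add: cconv_def)
  then have "eventually (\<lambda>k. coeff (G k) i \<noteq> 0) sequentially"
    using tendsto_imp_eventually_ne i by blast
  then obtain N where N: "\<And>k. k \<ge> N \<Longrightarrow> coeff (G k) i \<noteq> 0"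
    unfolding eventually_sequentially by blast
  have cc': "cconv (\<lambda>k. G (k + N)) p"
    using cc unfolding cconv_def by (auto intro: LIMSEQ_ignore_initial_segment)
  have nz': "\<And>k z. z \<in> \<Omega> \<Longrightarrow> poly (G (k + N)) z \<noteq> 0"
  proof -
    fix k z assume "z \<in> \<Omega>"
    moreover have "G (k + N) \<noteq> 0" using N[of "k + N"] by auto
    ultimately show "poly (G (k + N)) z \<noteq> 0" using nz[of "k + N"] by auto
  qed
  have "\<forall>z\<in>\<Omega>. poly p z \<noteq> 0"
    using hurwitz_poly[OF op cn cc' dG dp nz' False] by blast
  then show ?thesis by blast
qed simp

lemma Im_mob_real:
  fixes a b c d :: real and z :: complex
  shows "Im ((of_real a * z + of_real b) / (of_real c * z + of_real d))
       = (a * d - b * c) * Im z / (cmod (of_real c * z + of_real d))\<^sup>2"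
  by (simp add: Im_divide' algebra_simps)

lemma real_mob_den:
  fixes a b c d :: real and z :: complex
  assumes det: "a * d - b * c > 0" and z: "Im z \<noteq> 0"
  shows "of_real c * z + of_real d \<noteq> 0"
proof (cases "c = 0")
  case True
  then have "d \<noteq> 0" using det by auto
  then show ?thesis using True by simp
next
  case False
  have ne: "c * Im z \<noteq> 0" using False z by simp
  show ?thesis
  proof
    assume eq: "of_real c * z + of_real d = 0"
    have "Im (of_real c * z + of_real d) = 0" using eq by simp
    then show False using ne by simp
  qed
qed

lemma real_mob_nz:
  fixes a b c d \<sigma> :: real and f :: "complex poly"
  assumes det: "a * d - b * c > 0" and deg: "degree f \<le> k" and z: "Im z * \<sigma> > 0"
    and nz: "\<forall>w. Im w * \<sigma> > 0 \<longrightarrow> poly f w \<noteq> 0"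
  shows "poly (phi k (of_real a) (of_real b) (of_real c) (of_real d) f) z \<noteq> 0"
proof -
  have zi: "Im z \<noteq> 0" using z by auto
  have den: "of_real c * z + of_real d \<noteq> 0" by (rule real_mob_den[OF det zi])
  define w where "w = (of_real a * z + of_real b) / (of_real c * z + of_real d)"
  have "Im w = (a * d - b * c) * Im z / (cmod (of_real c * z + of_real d))\<^sup>2"
    unfolding w_def by (rule Im_mob_real)
  then have "Im w * \<sigma> = (a * d - b * c) * (Im z * \<sigma>) / (cmod (of_real c * z + of_real d))\<^sup>2"
    by simp
  moreover have "(cmod (of_real c * z + of_real d))\<^sup>2 > 0" using den by simp
  ultimately have "Im w * \<sigma> > 0" using det z by simp
  then have "poly f w \<noteq> 0" using nz by blast
  then show ?thesis
    unfolding poly_phi[OF deg den] w_def using den by simp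
qed

lemma root_avoid:
  fixes P :: "complex poly" and x0 \<delta> :: real
  assumes "P \<noteq> 0" "\<delta> > 0"
  shows "\<exists>x::real. \<bar>x - x0\<bar> < \<delta> \<and> poly P (of_real x) \<noteq> 0"
proof (rule ccontr)
  assume "\<not> ?thesis"
  then have "of_real ` {x0 - \<delta> <..< x0 + \<delta>} \<subseteq> {z. poly P z = 0}"
    by (auto simp: abs_less_iff)
  then have "finite (complex_of_real ` {x0 - \<delta> <..< x0 + \<delta>})"
    using poly_roots_finite[OF assms(1)] finite_subset by blast
  then have "finite {x0 - \<delta> <..< x0 + \<delta>}"
    using finite_imageD inj_of_real inj_on_subset by blast
  then show False using infinite_Ioo[of "x0 - \<delta>" "x0 + \<delta>"] assms(2) by simp
qed

lemma lin_pow_monom: "[:0, a:] ^ i = monom (a ^ i) i"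
proof -
  have "[:0, a:] = monom a 1" by (simp add: monom_Suc monom_0)
  then show ?thesis by (simp add: monom_power)
qed

lemma pw1: "[:0, 1:] ^ j = monom (1::complex) j"
  using lin_pow_monom[of "1::complex" j] by simp

lemma pw2: "[:1::complex, 0:] ^ m = 1"
  by (simp add: one_pCons[symmetric])

lemma phi_id:
  fixes g :: "complex poly"
  assumes "degree g \<le> n"
  shows "phi n 1 0 0 1 g = g"
proof -
  have "phi n 1 0 0 1 g = (\<Sum>j\<le>n. smult (coeff g j) (monom 1 j))"
    unfolding phi_def pw1 pw2 by simp
  then show ?thesis using monom_sum[OF assms] by simp
qed

lemma coeff_shift_pow: "coeff ([:t, 1:] ^ i) j = of_nat (i choose j) * t ^ (i - j)"
proof (cases "j \<le> i")
  case True
  then show ?thesis by (simp add: coeff_linear_poly_power)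
next
  case False
  have "degree ([:t, 1:] ^ i) \<le> i"
    using degree_power_le[of "[:t, 1:]" i] by simp
  then have "coeff ([:t, 1:] ^ i) j = 0" using False by (simp add: coeff_eq_0)
  then show ?thesis using False by (simp add: binomial_eq_0)
qed

definition pert :: "nat \<Rightarrow> real \<Rightarrow> real \<Rightarrow> real \<Rightarrow> complex poly \<Rightarrow> complex poly" where
  "pert n l s t g = phi n (of_real l) 0 0 1 (phi n 1 (of_real t) 0 1 (phi n 1 0 (of_real s) 1 g))"

lemma pert_exists:
  fixes L :: "complex poly \<Rightarrow> complex" and g h0 :: "complex poly"
  assumes add: "\<And>f g. degree f \<le> n \<Longrightarrow> degree g \<le> n \<Longrightarrow> L (f + g) = L f + L g"
    and sm: "\<And>f s. degree f \<le> n \<Longrightarrow> L (smult s f) = s * L f"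
    and h0: "degree h0 \<le> n" "L h0 \<noteq> 0"
    and g: "degree g \<le> n" "g \<noteq> 0" and dl: "\<delta> > 0"
  shows "\<exists>l s t::real. \<bar>l - 1\<bar> < \<delta> \<and> \<bar>s - 0\<bar> < \<delta> \<and> \<bar>t - 0\<bar> < \<delta> \<and> L (pert n l s t g) \<noteq> 0"
proof (rule ccontr)
  assume H: "\<not> ?thesis"
  have Lj: "L (monom 1 j) = 0" if j: "j \<le> n" for j
  proof -
    define K where "K = degree g"
    have K: "K \<le> n" "coeff g K \<noteq> 0" using g unfolding K_def by auto
    define P1 where "P1 = (\<Sum>i\<le>n. monom (coeff g i) (n - i))"
    have "coeff P1 (n - K) = (\<Sum>i\<le>n. if i = K then coeff g K else 0)"
      unfolding P1_def coeff_sum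
      by (rule sum.cong) (use K in \<open>auto simp: coeff_monom\<close>)
    also have "\<dots> = coeff g K" using K by simp
    finally have "P1 \<noteq> 0" using K by auto
    then obtain s where s: "\<bar>s - 0\<bar> < \<delta>" "poly P1 (of_real s) \<noteq> 0"
      using root_avoid[OF _ dl] by blast
    define h1 where "h1 = phi n 1 0 (of_real s) 1 g"
    have "coeff h1 n = (\<Sum>i\<le>n. coeff g i * (1 ^ i * of_real s ^ (n - i)))"
      unfolding h1_def by (rule coeff_phi_top)
    also have "\<dots> = poly P1 (of_real s)"
      unfolding P1_def by (simp add: poly_sum poly_monom)
    finally have h1n: "coeff h1 n \<noteq> 0" using s by simp
    have dh1: "degree h1 \<le> n" unfolding h1_def by (rule degree_phi)
    define P2 where "P2 = (\<Sum>i\<le>n. monom (coeff h1 i * of_nat (i choose j)) (i - j))"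
    have "coeff P2 (n - j) = (\<Sum>i\<le>n. if i = n then coeff h1 n * of_nat (n choose j) else 0)"
      unfolding P2_def coeff_sum
    proof (rule sum.cong)
      fix i assume i: "i \<in> {..n}"
      show "coeff (monom (coeff h1 i * of_nat (i choose j)) (i - j)) (n - j) =
          (if i = n then coeff h1 n * of_nat (n choose j) else 0)"
      proof (cases "i = n")
        case False
        then have "i < n" using i by simp
        then have "i - j \<noteq> n - j \<or> i < j" using j by linarith
        then show ?thesis using False by (auto simp: coeff_monom)
      qed (simp add: coeff_monom)
    qed simp
    also have "\<dots> = coeff h1 n * of_nat (n choose j)" by simp
    finally have "P2 \<noteq> 0" using h1n j by auto
    then obtain t where t: "\<bar>t - 0\<bar> < \<delta>" "poly P2 (of_real t) \<noteq> 0"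
      using root_avoid[OF _ dl] by blast
    define h2 where "h2 = phi n 1 (of_real t) 0 1 h1"
    have "coeff h2 j = (\<Sum>i\<le>n. coeff h1 i * coeff ([:of_real t, 1:] ^ i) j)"
      unfolding h2_def phi_def coeff_sum pw2 by simp
    also have "\<dots> = poly P2 (of_real t)"
      unfolding P2_def by (simp add: poly_sum poly_monom coeff_shift_pow mult_ac)
    finally have h2j: "coeff h2 j \<noteq> 0" using t by simp
    define P3 where "P3 = (\<Sum>i\<le>n. monom (coeff h2 i * L (monom 1 i)) i)"
    have dm: "\<And>i. i \<in> {..n} \<Longrightarrow> degree (monom (1::complex) i) \<le> n"
      by (simp add: degree_monom_eq)
    have P3l: "L (phi n (of_real l) 0 0 1 h2) = poly P3 (of_real l)" for l :: real
    proof -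
      have "phi n (of_real l) 0 0 1 h2 = (\<Sum>i\<le>n. smult (coeff h2 i * of_real l ^ i) (monom 1 i))"
        unfolding phi_def lin_pow_monom pw2 by (simp add: smult_monom)
      then have "L (phi n (of_real l) 0 0 1 h2) = (\<Sum>i\<le>n. (coeff h2 i * of_real l ^ i) * L (monom 1 i))"
        using lin_sum[where n=n and L=L and A="{..n}" and p="\<lambda>i. monom 1 i"
            and cf="\<lambda>i. coeff h2 i * of_real l ^ i", OF add sm finite_atMost dm] by simp
      then show ?thesis unfolding P3_def by (simp add: poly_sum poly_monom mult_ac)
    qed
    have "P3 = 0"
    proof (rule ccontr)
      assume "P3 \<noteq> 0"
      then obtain l where l: "\<bar>l - 1\<bar> < \<delta>" "poly P3 (of_real l) \<noteq> 0"
        using root_avoid[OF _ dl] by blast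
      have "L (pert n l s t g) \<noteq> 0"
        unfolding pert_def h1_def[symmetric] h2_def[symmetric] P3l using l by simp
      then show False using H l s t by blast
    qed
    then have "coeff P3 j = 0" by simp
    moreover have "coeff P3 j = coeff h2 j * L (monom 1 j)"
      unfolding P3_def coeff_sum using j by (simp add: coeff_monom)
    ultimately show ?thesis using h2j by simp
  qed
  have "L h0 = (\<Sum>j\<le>n. coeff h0 j * L (monom 1 j))"
    by (rule lin_expand[OF add sm h0(1)])
  also have "\<dots> = 0" using Lj by simp
  finally show False using h0(2) by simp
qed

lemma pert_props:
  fixes g :: "complex poly"
  assumes deg: "degree g \<le> n" and l: "l > 0"
  shows "degree (pert n l s t g) \<le> n"
    and "g \<noteq> 0 \<Longrightarrow> pert n l s t g \<noteq> 0"
    and "\<forall>w. Im w * \<sigma> > 0 \<longrightarrow> poly g w \<noteq> 0 \<Longrightarrow> \<forall>w. Im w * \<sigma> > 0 \<longrightarrow> poly (pert n l s t g) w \<noteq> 0"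
proof -
  show "degree (pert n l s t g) \<le> n" unfolding pert_def by (rule degree_phi)
  define h1 where "h1 = phi n 1 0 (of_real s) 1 g"
  define h2 where "h2 = phi n 1 (of_real t) 0 1 h1"
  have d1: "degree h1 \<le> n" unfolding h1_def by (rule degree_phi)
  have d2: "degree h2 \<le> n" unfolding h2_def by (rule degree_phi)
  have pe: "pert n l s t g = phi n (of_real l) 0 0 1 h2" unfolding pert_def h1_def h2_def ..
  show "g \<noteq> 0 \<Longrightarrow> pert n l s t g \<noteq> 0"
  proof -
    assume g0: "g \<noteq> 0"
    have "h1 \<noteq> 0" unfolding h1_def using phi_eq0_iff[where a=1 and b=0 and c="of_real s" and d=1 and f=g and k=n] deg g0 by simp
    then have "h2 \<noteq> 0" unfolding h2_def using phi_eq0_iff[where a=1 and b="of_real t" and c=0 and d=1 and f=h1 and k=n] d1 by simp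
    then show ?thesis unfolding pe using phi_eq0_iff[where a="of_real l" and b=0 and c=0 and d=1 and f=h2 and k=n] d2 l by simp
  qed
  assume nz: "\<forall>w. Im w * \<sigma> > 0 \<longrightarrow> poly g w \<noteq> 0"
  have n1: "\<forall>w. Im w * \<sigma> > 0 \<longrightarrow> poly h1 w \<noteq> 0"
    using real_mob_nz[where a=1 and b=0 and c=s and d=1 and k=n and f=g and \<sigma>=\<sigma>] deg nz unfolding h1_def by simp
  have n2: "\<forall>w. Im w * \<sigma> > 0 \<longrightarrow> poly h2 w \<noteq> 0"
    using real_mob_nz[where a=1 and b=t and c=0 and d=1 and k=n and f=h1 and \<sigma>=\<sigma>] d1 n1 unfolding h2_def by simp
  show "\<forall>w. Im w * \<sigma> > 0 \<longrightarrow> poly (pert n l s t g) w \<noteq> 0"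
    using real_mob_nz[where a=l and b=0 and c=0 and d=1 and k=n and f=h2 and \<sigma>=\<sigma>] d2 n2 l unfolding pe by simp
qed

lemma conv_bound:
  fixes X :: "nat \<Rightarrow> real"
  assumes "\<And>k. \<bar>X k - a\<bar> < inverse (real (Suc k))"
  shows "X \<longlonglongrightarrow> a"
proof -
  have "(\<lambda>k. X k - a) \<longlonglongrightarrow> 0"
    by (rule Lim_null_comparison[OF _ LIMSEQ_inverse_real_of_nat])
       (use assms in \<open>auto intro!: always_eventually less_imp_le\<close>)
  then show ?thesis by (rule LIM_zero_cancel)
qed

lemma approx_pert:
  fixes L :: "complex poly \<Rightarrow> complex" and g h0 :: "complex poly"
  assumes add: "\<And>f g. degree f \<le> n \<Longrightarrow> degree g \<le> n \<Longrightarrow> L (f + g) = L f + L g"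
    and sm: "\<And>f s. degree f \<le> n \<Longrightarrow> L (smult s f) = s * L f"
    and h0: "degree h0 \<le> n" "L h0 \<noteq> 0"
    and g: "degree g \<le> n" "g \<noteq> 0"
  shows "\<exists>G. cconv G g \<and> (\<forall>k. degree (G k) \<le> n) \<and> (\<forall>k. L (G k) \<noteq> 0) \<and> (\<forall>k. G k \<noteq> 0)
      \<and> (\<forall>\<sigma>. (\<forall>w. Im w * \<sigma> > 0 \<longrightarrow> poly g w \<noteq> 0) \<longrightarrow> (\<forall>k w. Im w * \<sigma> > 0 \<longrightarrow> poly (G k) w \<noteq> 0))"
proof -
  have ex: "\<forall>k. \<exists>x::real \<times> real \<times> real. \<bar>fst x - 1\<bar> < inverse (real (Suc k)) \<and>
      \<bar>fst (snd x) - 0\<bar> < inverse (real (Suc k)) \<and> \<bar>snd (snd x) - 0\<bar> < inverse (real (Suc k)) \<and>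
      L (pert n (fst x) (fst (snd x)) (snd (snd x)) g) \<noteq> 0"
  proof
    fix k
    have "inverse (real (Suc k)) > 0" by simp
    from pert_exists[OF add sm h0 g this] obtain l s t where
      "\<bar>l - 1\<bar> < inverse (real (Suc k))" "\<bar>s - 0\<bar> < inverse (real (Suc k))"
      "\<bar>t - 0\<bar> < inverse (real (Suc k))" "L (pert n l s t g) \<noteq> 0" by blast
    then show "\<exists>x::real \<times> real \<times> real. \<bar>fst x - 1\<bar> < inverse (real (Suc k)) \<and>
      \<bar>fst (snd x) - 0\<bar> < inverse (real (Suc k)) \<and> \<bar>snd (snd x) - 0\<bar> < inverse (real (Suc k)) \<and>
      L (pert n (fst x) (fst (snd x)) (snd (snd x)) g) \<noteq> 0"
      by (intro exI[of _ "(l, s, t)"]) simp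
  qed
  from choice[OF ex] obtain F where F: "\<And>k. \<bar>fst (F k) - 1\<bar> < inverse (real (Suc k)) \<and>
      \<bar>fst (snd (F k)) - 0\<bar> < inverse (real (Suc k)) \<and> \<bar>snd (snd (F k)) - 0\<bar> < inverse (real (Suc k)) \<and>
      L (pert n (fst (F k)) (fst (snd (F k))) (snd (snd (F k))) g) \<noteq> 0" by blast
  define Lm where "Lm = (\<lambda>k. fst (F k))"
  define Sm where "Sm = (\<lambda>k. fst (snd (F k)))"
  define Tm where "Tm = (\<lambda>k. snd (snd (F k)))"
  have cL: "Lm \<longlonglongrightarrow> 1" unfolding Lm_def by (rule conv_bound) (use F in blast)
  have cS: "Sm \<longlonglongrightarrow> 0" unfolding Sm_def by (rule conv_bound) (use F in blast)
  have cT: "Tm \<longlonglongrightarrow> 0" unfolding Tm_def by (rule conv_bound) (use F in blast)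
  have lpos: "Lm k > 0" for k
  proof -
    have "inverse (real (Suc k)) \<le> 1" using le_imp_inverse_le[of 1 "real (Suc k)"] by simp
    then show ?thesis using F[of k] unfolding Lm_def by linarith
  qed
  define G where "G = (\<lambda>k. pert n (Lm k) (Sm k) (Tm k) g)"
  have oL: "(\<lambda>k. complex_of_real (Lm k)) \<longlonglongrightarrow> 1"
    using tendsto_of_real[OF cL, where 'a=complex] by simp
  have oS: "(\<lambda>k. complex_of_real (Sm k)) \<longlonglongrightarrow> 0"
    using tendsto_of_real[OF cS, where 'a=complex] by simp
  have oT: "(\<lambda>k. complex_of_real (Tm k)) \<longlonglongrightarrow> 0"
    using tendsto_of_real[OF cT, where 'a=complex] by simp
  have "cconv G (phi n 1 0 0 1 (phi n 1 0 0 1 (phi n 1 0 0 1 g)))"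
    unfolding G_def pert_def
    by (intro cconv_phi cconv_const oL oS oT tendsto_const)
  then have cc: "cconv G g" using phi_id[OF g(1)] by simp
  show ?thesis
  proof (intro exI[of _ G] conjI allI impI cc)
    fix k
    show "degree (G k) \<le> n" unfolding G_def by (rule pert_props(1)[OF g(1) lpos])
    show "L (G k) \<noteq> 0" unfolding G_def Lm_def Sm_def Tm_def using F by blast
    show "G k \<noteq> 0" unfolding G_def by (rule pert_props(2)[OF g(1) lpos g(2)])
  next
    fix \<sigma> k w
    assume "\<forall>w. Im w * \<sigma> > 0 \<longrightarrow> poly g w \<noteq> 0" "Im w * \<sigma> > 0"
    then show "poly (G k) w \<noteq> 0"
      unfolding G_def using pert_props(3)[OF g(1) lpos] by blast
  qed
qed

lemma avoid_alpha:
  fixes a b c d w :: complex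
  assumes det: "a * d - b * c \<noteq> 0" and av: "c = 0 \<or> w \<noteq> a / c"
  shows "a - c * w \<noteq> 0"
proof
  assume h: "a - c * w = 0"
  show False
  proof (cases "c = 0")
    case True then show False using h det by simp
  next
    case False
    then have "w = a / c" using h by (simp add: field_simps)
    then show False using av False by simp
  qed
qed

lemma mob_fwd:
  fixes a b c d w :: complex
  assumes det: "a * d - b * c \<noteq> 0" and aw: "a - c * w \<noteq> 0"
  shows "c * ((d * w - b) / (a - c * w)) + d \<noteq> 0"
    and "(a * ((d * w - b) / (a - c * w)) + b) / (c * ((d * w - b) / (a - c * w)) + d) = w"
proof -
  have 1: "c * ((d * w - b) / (a - c * w)) + d = (a * d - b * c) / (a - c * w)"
    using aw by (simp add: field_simps)
  then show "c * ((d * w - b) / (a - c * w)) + d \<noteq> 0" using det aw by simp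
  have n: "a * ((d * w - b) / (a - c * w)) + b = (a * d - b * c) * w / (a - c * w)"
    using aw by (simp add: field_simps)
  have gen: "\<And>X Y z :: complex. X \<noteq> 0 \<Longrightarrow> Y \<noteq> 0 \<Longrightarrow> (X * z / Y) / (X / Y) = z"
    by (simp add: field_simps)
  show "(a * ((d * w - b) / (a - c * w)) + b) / (c * ((d * w - b) / (a - c * w)) + d) = w"
    unfolding n 1 by (rule gen[OF det aw])
qed

lemma mob_ne_alpha:
  fixes a b c d z :: complex
  assumes det: "a * d - b * c \<noteq> 0" and cz: "c * z + d \<noteq> 0"
  shows "c = 0 \<or> (a * z + b) / (c * z + d) \<noteq> a / c"
proof (cases "c = 0")
  case False
  define X where "X = (a * z + b) / (c * z + d)"
  have "(- c) * X + a = (a * d - b * c) / (c * z + d)"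
    unfolding X_def by (rule mob_back(1)[OF det cz])
  then have ne: "(- c) * X + a \<noteq> 0" using det cz by simp
  have "X \<noteq> a / c"
  proof
    assume "X = a / c"
    then have "(- c) * X + a = 0" using False by simp
    then show False using ne by simp
  qed
  then show ?thesis unfolding X_def by simp
qed simp

lemma mob_back2:
  fixes a b c d z :: complex
  assumes det: "a * d - b * c \<noteq> 0" and cz: "c * z + d \<noteq> 0"
  shows "(d * ((a * z + b) / (c * z + d)) - b) / (a - c * ((a * z + b) / (c * z + d))) = z"
proof -
  define X where "X = (a * z + b) / (c * z + d)"
  have "(d * X + - b) / ((- c) * X + a) = z" unfolding X_def by (rule mob_back(2)[OF det cz])
  moreover have "d * X + - b = d * X - b" "(- c) * X + a = a - c * X" by simp_all
  ultimately show ?thesis unfolding X_def[symmetric] by simp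
qed

lemma stab_transfer:
  fixes a b c d :: complex and h :: "complex poly"
  assumes det: "a * d - b * c \<noteq> 0" and deg: "degree h \<le> k"
  shows "stable_on (circ_dom a b c d) (phi k a b c d h) \<longleftrightarrow>
         h \<noteq> 0 \<and> (\<forall>w. Im w > 0 \<and> (c = 0 \<or> w \<noteq> a / c) \<longrightarrow> poly h w \<noteq> 0)"
proof -
  have e0: "phi k a b c d h \<noteq> 0 \<longleftrightarrow> h \<noteq> 0" using phi_eq0_iff[OF det deg] by simp
  have "(\<forall>z\<in>circ_dom a b c d. poly (phi k a b c d h) z \<noteq> 0) \<longleftrightarrow>
        (\<forall>w. Im w > 0 \<and> (c = 0 \<or> w \<noteq> a / c) \<longrightarrow> poly h w \<noteq> 0)"
  proof
    assume L: "\<forall>z\<in>circ_dom a b c d. poly (phi k a b c d h) z \<noteq> 0"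
    show "\<forall>w. Im w > 0 \<and> (c = 0 \<or> w \<noteq> a / c) \<longrightarrow> poly h w \<noteq> 0"
    proof (intro allI impI)
      fix w assume w: "Im w > 0 \<and> (c = 0 \<or> w \<noteq> a / c)"
      then have aw: "a - c * w \<noteq> 0" using avoid_alpha[OF det] by blast
      define z where "z = (d * w - b) / (a - c * w)"
      have cz: "c * z + d \<noteq> 0" and fz: "(a * z + b) / (c * z + d) = w"
        unfolding z_def using mob_fwd[OF det aw] by auto
      have "z \<in> circ_dom a b c d" unfolding circ_dom_def using cz fz w by simp
      then have "poly (phi k a b c d h) z \<noteq> 0" using L by blast
      then show "poly h w \<noteq> 0" unfolding poly_phi[OF deg cz] fz by simp
    qed
  next
    assume R: "\<forall>w. Im w > 0 \<and> (c = 0 \<or> w \<noteq> a / c) \<longrightarrow> poly h w \<noteq> 0"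
    show "\<forall>z\<in>circ_dom a b c d. poly (phi k a b c d h) z \<noteq> 0"
    proof
      fix z assume "z \<in> circ_dom a b c d"
      then have cz: "c * z + d \<noteq> 0" and im: "Im ((a * z + b) / (c * z + d)) > 0"
        unfolding circ_dom_def by auto
      have "poly h ((a * z + b) / (c * z + d)) \<noteq> 0"
        using R im mob_ne_alpha[OF det cz] by blast
      then show "poly (phi k a b c d h) z \<noteq> 0" unfolding poly_phi[OF deg cz] using cz by simp
    qed
  qed
  then show ?thesis unfolding stable_on_def using e0 by blast
qed

lemma open_circ_dom:
  fixes a b c d :: complex
  shows "open (circ_dom a b c d)"
proof -
  have o1: "open {z. c * z + d \<noteq> 0}"
    by (rule open_Collect_neq) (auto intro!: continuous_intros)
  have "continuous_on {z. c * z + d \<noteq> 0} (\<lambda>z. (a * z + b) / (c * z + d))"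
    by (auto intro!: continuous_intros)
  then have "open ({z. c * z + d \<noteq> 0} \<inter> (\<lambda>z. (a * z + b) / (c * z + d)) -` {w. 0 < Im w})"
    by (rule continuous_open_preimage[OF _ o1 open_halfspace_Im_gt])
  moreover have "{z. c * z + d \<noteq> 0} \<inter> (\<lambda>z. (a * z + b) / (c * z + d)) -` {w. 0 < Im w} = circ_dom a b c d"
    unfolding circ_dom_def by auto
  ultimately show ?thesis by simp
qed

lemma frontier_a:
  fixes a b c d z :: complex
  assumes det: "a * d - b * c \<noteq> 0" and cz: "c * z + d \<noteq> 0"
  shows "z \<in> frontier (circ_dom a b c d) \<longleftrightarrow> Im ((a * z + b) / (c * z + d)) = 0"
proof -
  let ?C = "circ_dom a b c d"
  have fr: "frontier ?C = closure ?C - ?C"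
    unfolding frontier_def using interior_open[OF open_circ_dom] by simp
  define w0 where "w0 = (a * z + b) / (c * z + d)"
  show ?thesis
  proof
    assume "z \<in> frontier ?C"
    then have zc: "z \<in> closure ?C" and zn: "z \<notin> ?C" unfolding fr by auto
    from zn cz have le: "Im w0 \<le> 0" unfolding circ_dom_def w0_def by auto
    from zc obtain x where x: "\<And>n. x n \<in> ?C" "x \<longlonglongrightarrow> z"
      unfolding closure_sequential by blast
    have "(\<lambda>n. (a * x n + b) / (c * x n + d)) \<longlonglongrightarrow> w0"
      unfolding w0_def using cz by (intro tendsto_intros x(2))
    then have "(\<lambda>n. Im ((a * x n + b) / (c * x n + d))) \<longlonglongrightarrow> Im w0"
      by (rule tendsto_Im)
    moreover have "\<forall>n. 0 \<le> Im ((a * x n + b) / (c * x n + d))"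
      using x(1) unfolding circ_dom_def by (auto intro: less_imp_le)
    ultimately have "0 \<le> Im w0" using LIMSEQ_le_const by blast
    then show "Im ((a * z + b) / (c * z + d)) = 0" using le unfolding w0_def by simp
  next
    assume im0: "Im ((a * z + b) / (c * z + d)) = 0"
    then have zn: "z \<notin> ?C" unfolding circ_dom_def by auto
    have aw0: "a - c * w0 \<noteq> 0"
      using avoid_alpha[OF det] mob_ne_alpha[OF det cz] unfolding w0_def by blast
    define wk where "wk = (\<lambda>k::nat. w0 + \<i> * of_real (inverse (real (Suc k))))"
    have wk: "wk \<longlonglongrightarrow> w0"
      unfolding wk_def
      using tendsto_add[OF tendsto_const tendsto_mult[OF tendsto_const tendsto_of_real[OF LIMSEQ_inverse_real_of_nat]], of w0 \<i>]
      by simp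
    define xk where "xk = (\<lambda>k. (d * wk k - b) / (a - c * wk k))"
    have "xk \<longlonglongrightarrow> (d * w0 - b) / (a - c * w0)"
      unfolding xk_def using aw0 by (intro tendsto_intros wk)
    also have "(d * w0 - b) / (a - c * w0) = z" unfolding w0_def by (rule mob_back2[OF det cz])
    finally have xz: "xk \<longlonglongrightarrow> z" .
    have ev: "eventually (\<lambda>k. c = 0 \<or> wk k \<noteq> a / c) sequentially"
    proof (cases "c = 0")
      case False
      have "w0 \<noteq> a / c" using mob_ne_alpha[OF det cz] False unfolding w0_def by simp
      then have "eventually (\<lambda>k. wk k \<noteq> a / c) sequentially"
        by (rule tendsto_imp_eventually_ne[OF wk])
      then show ?thesis by (rule eventually_mono) simp
    qed simp
    have "eventually (\<lambda>k. xk k \<in> ?C) sequentially"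
    proof (rule eventually_mono[OF ev])
      fix k assume "c = 0 \<or> wk k \<noteq> a / c"
      then have awk: "a - c * wk k \<noteq> 0" using avoid_alpha[OF det] by blast
      have "Im (wk k) > 0" unfolding wk_def using im0 unfolding w0_def by simp
      then show "xk k \<in> ?C" unfolding circ_dom_def xk_def using mob_fwd[OF det awk] by simp
    qed
    then have "z \<in> closure ?C"
      using Lim_in_closed_set[OF closed_closure _ _ xz] closure_subset
      by (metis (mono_tags, lifting) eventually_mono sequentially_bot subsetD)
    then show "z \<in> frontier ?C" unfolding fr using zn by simp
  qed
qed

lemma frontier_b:
  fixes a b c d :: complex
  assumes det: "a * d - b * c \<noteq> 0" and c0: "c \<noteq> 0"
  shows "- d / c \<in> frontier (circ_dom a b c d)"
proof -
  let ?C = "circ_dom a b c d"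
  have fr: "frontier ?C = closure ?C - ?C"
    unfolding frontier_def using interior_open[OF open_circ_dom] by simp
  have zn: "- d / c \<notin> ?C" unfolding circ_dom_def using c0 by simp
  define e where "e = (\<lambda>k::nat. complex_of_real (inverse (real (Suc k))))"
  have e0: "e \<longlonglongrightarrow> 0" unfolding e_def
    using tendsto_of_real[OF LIMSEQ_inverse_real_of_nat, where 'a=complex] by simp
  define wk where "wk = (\<lambda>k::nat. \<i> * of_nat (Suc k))"
  define xk where "xk = (\<lambda>k. (d * wk k - b) / (a - c * wk k))"
  have xk_eq: "xk k = (d * \<i> - b * e k) / (a * e k - c * \<i>)" for k
  proof -
    define Nk where "Nk = complex_of_nat (Suc k)"
    have ne: "Nk \<noteq> 0" unfolding Nk_def using of_nat_neq_0[of k, where 'a=complex] by simp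
    have ek: "e k = 1 / Nk" unfolding e_def Nk_def by (simp add: divide_inverse)
    have gen: "\<And>X Y N :: complex. N \<noteq> 0 \<Longrightarrow> X / Y = (X / N) / (Y / N)"
      by (simp add: field_simps)
    have "xk k = (d * (\<i> * Nk) - b) / (a - c * (\<i> * Nk))" unfolding xk_def wk_def Nk_def by simp
    also have "\<dots> = ((d * (\<i> * Nk) - b) / Nk) / ((a - c * (\<i> * Nk)) / Nk)" by (rule gen[OF ne])
    also have "(d * (\<i> * Nk) - b) / Nk = d * \<i> - b * e k" unfolding ek using ne by (simp add: field_simps)
    also have "(a - c * (\<i> * Nk)) / Nk = a * e k - c * \<i>" unfolding ek using ne by (simp add: field_simps)
    finally show ?thesis .
  qed
  have "(\<lambda>k. (d * \<i> - b * e k) / (a * e k - c * \<i>)) \<longlonglongrightarrow> (d * \<i> - b * 0) / (a * 0 - c * \<i>)"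
    using c0 by (intro tendsto_intros e0) simp
  moreover have "(d * \<i> - b * 0) / (a * 0 - c * \<i>) = - d / c" using c0 by (simp add: field_simps)
  ultimately have lim: "(\<lambda>k. (d * \<i> - b * e k) / (a * e k - c * \<i>)) \<longlonglongrightarrow> - d / c" by simp
  have xfun: "xk = (\<lambda>k. (d * \<i> - b * e k) / (a * e k - c * \<i>))" by (rule ext, rule xk_eq)
  have xz: "xk \<longlonglongrightarrow> - d / c" unfolding xfun by (rule lim)
  obtain N :: nat where N: "\<bar>Im (a / c)\<bar> < real N" using reals_Archimedean2 by blast
  have "eventually (\<lambda>k. xk k \<in> ?C) sequentially"
    unfolding eventually_sequentially
  proof (intro exI allI impI)
    fix k assume "N \<le> k"
    then have "Im (wk k) \<noteq> Im (a / c)" unfolding wk_def using N by simp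
    then have "wk k \<noteq> a / c" by auto
    then have awk: "a - c * wk k \<noteq> 0" using avoid_alpha[OF det] by blast
    have "Im (wk k) > 0" unfolding wk_def by simp
    then show "xk k \<in> ?C" unfolding circ_dom_def xk_def using mob_fwd[OF det awk] by simp
  qed
  then have "- d / c \<in> closure ?C"
    using Lim_in_closed_set[OF closed_closure _ _ xz] closure_subset
    by (metis (mono_tags, lifting) eventually_mono sequentially_bot subsetD)
  then show ?thesis unfolding fr using zn by simp
qed

lemma zeros_transfer:
  fixes a b c d :: complex and h :: "complex poly"
  assumes det: "a * d - b * c \<noteq> 0" and deg: "degree h \<le> k"
  shows "phi k a b c d h \<in> zeros_in (frontier (circ_dom a b c d)) \<longleftrightarrow>
         h \<noteq> 0 \<and> (\<forall>w. poly h w = 0 \<and> (c = 0 \<or> w \<noteq> a / c) \<longrightarrow> Im w = 0)"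
proof -
  have e0: "phi k a b c d h \<noteq> 0 \<longleftrightarrow> h \<noteq> 0" using phi_eq0_iff[OF det deg] by simp
  have "(\<forall>z. poly (phi k a b c d h) z = 0 \<longrightarrow> z \<in> frontier (circ_dom a b c d)) \<longleftrightarrow>
        (\<forall>w. poly h w = 0 \<and> (c = 0 \<or> w \<noteq> a / c) \<longrightarrow> Im w = 0)"
  proof
    assume L: "\<forall>z. poly (phi k a b c d h) z = 0 \<longrightarrow> z \<in> frontier (circ_dom a b c d)"
    show "\<forall>w. poly h w = 0 \<and> (c = 0 \<or> w \<noteq> a / c) \<longrightarrow> Im w = 0"
    proof (intro allI impI)
      fix w assume w: "poly h w = 0 \<and> (c = 0 \<or> w \<noteq> a / c)"
      then have aw: "a - c * w \<noteq> 0" using avoid_alpha[OF det] by blast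
      define z where "z = (d * w - b) / (a - c * w)"
      have cz: "c * z + d \<noteq> 0" and fz: "(a * z + b) / (c * z + d) = w"
        unfolding z_def using mob_fwd[OF det aw] by auto
      have "poly (phi k a b c d h) z = 0" unfolding poly_phi[OF deg cz] fz using w by simp
      then have "z \<in> frontier (circ_dom a b c d)" using L by blast
      then show "Im w = 0" using frontier_a[OF det cz] fz by simp
    qed
  next
    assume R: "\<forall>w. poly h w = 0 \<and> (c = 0 \<or> w \<noteq> a / c) \<longrightarrow> Im w = 0"
    show "\<forall>z. poly (phi k a b c d h) z = 0 \<longrightarrow> z \<in> frontier (circ_dom a b c d)"
    proof (intro allI impI)
      fix z assume pz: "poly (phi k a b c d h) z = 0"
      show "z \<in> frontier (circ_dom a b c d)"
      proof (cases "c * z + d = 0")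
        case False
        then have "poly h ((a * z + b) / (c * z + d)) = 0"
          using pz unfolding poly_phi[OF deg False] by simp
        then have "Im ((a * z + b) / (c * z + d)) = 0"
          using R mob_ne_alpha[OF det False] by blast
        then show ?thesis using frontier_a[OF det False] by simp
      next
        case True
        have c0: "c \<noteq> 0"
        proof
          assume "c = 0"
          then have "d = 0" using True by simp
          then show False using det \<open>c = 0\<close> by simp
        qed
        then have "z = - d / c" using True by (simp add: field_simps add_eq_0_iff)
        then show ?thesis using frontier_b[OF det c0] by simp
      qed
    qed
  qed
  then show ?thesis unfolding zeros_in_def using e0 by blast
qed

lemma zeros_in_R:
  "f \<in> zeros_in (complex_of_real ` UNIV) \<longleftrightarrow> f \<noteq> 0 \<and> (\<forall>w. poly f w = 0 \<longrightarrow> Im w = 0)"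
proof -
  have "\<And>z. z \<in> complex_of_real ` UNIV \<longleftrightarrow> Im z = 0"
  proof
    fix z :: complex assume "Im z = 0"
    then have "z = of_real (Re z)" by (simp add: complex_eq_iff)
    then show "z \<in> complex_of_real ` UNIV" by blast
  qed auto
  then show ?thesis unfolding zeros_in_def by auto
qed

lemma halfplane_case:
  fixes a b c d :: complex
  assumes det: "a * d - b * c \<noteq> 0" and c0: "c \<noteq> 0" and im: "Im (a / c) = 0"
  shows "is_open_halfplane (circ_dom a b c d)"
proof -
  define r where "r = a / c"
  have ar: "a = r * c" unfolding r_def using c0 by simp
  have imr: "Im r = 0" unfolding r_def using im .
  define K where "K = b - r * d"
  have K0: "K \<noteq> 0"
  proof
    assume "K = 0"
    then have "b = r * d" unfolding K_def by simp
    then have "a * d - b * c = 0" using ar by (simp add: algebra_simps)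
    then show False using det by simp
  qed
  define w where "w = - (cnj K * c)"
  define r0 where "r0 = Im (cnj K * d)"
  have w0: "w \<noteq> 0" unfolding w_def using K0 c0 by simp
  have "circ_dom a b c d = {z. Im (w * z) > r0}"
  proof (intro set_eqI iffI)
    fix z
    define u where "u = c * z + d"
    have key: "Im (w * z) - r0 = Im (K * cnj u)"
      unfolding w_def r0_def u_def by (simp add: algebra_simps)
    have num: "a * z + b = r * u + K" unfolding u_def K_def ar by (simp add: algebra_simps)
    {
      assume "z \<in> circ_dom a b c d"
      then have u0: "u \<noteq> 0" and pos: "Im ((a * z + b) / u) > 0"
        unfolding circ_dom_def u_def by auto
      have "(a * z + b) / u = r + K / u" unfolding num using u0 by (simp add: field_simps)
      then have "Im ((a * z + b) / u) = Im (K * cnj u) / (cmod u)\<^sup>2"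
        using imr by (simp add: complex_div_cnj[of K u] Im_divide_of_real)
      then have "Im (K * cnj u) > 0" using pos u0
        by (metis divide_le_0_iff not_less zero_le_power2)
      then show "z \<in> {z. Im (w * z) > r0}" using key by simp
    }
    {
      assume "z \<in> {z. Im (w * z) > r0}"
      then have pos: "Im (K * cnj u) > 0" using key by simp
      have u0: "u \<noteq> 0" using pos by auto
      have "(a * z + b) / u = r + K / u" unfolding num using u0 by (simp add: field_simps)
      then have "Im ((a * z + b) / u) = Im (K * cnj u) / (cmod u)\<^sup>2"
        using imr by (simp add: complex_div_cnj[of K u] Im_divide_of_real)
      then have "Im ((a * z + b) / u) > 0" using pos u0 by simp
      then show "z \<in> circ_dom a b c d" unfolding circ_dom_def u_def using u0 u_def by simp
    }
  qed
  then show ?thesis unfolding is_open_halfplane_def using w0 by blast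
qed

lemma top_c0:
  fixes g :: "complex poly"
  shows "(\<Sum>j\<le>n. coeff g j * (a ^ j * (0::complex) ^ (n - j))) = coeff g n * a ^ n"
proof -
  have "(\<Sum>j\<le>n. coeff g j * (a ^ j * (0::complex) ^ (n - j))) = (\<Sum>j\<le>n. if j = n then coeff g n * a ^ n else 0)"
    by (rule sum.cong) auto
  then show ?thesis by simp
qed

lemma top_c:
  fixes g :: "complex poly" and a c :: complex
  assumes c0: "c \<noteq> 0" and deg: "degree g \<le> n"
  shows "coeff (phi n a b c d g) n = c ^ n * poly g (a / c)"
proof -
  have "coeff (phi n a b c d g) n = (\<Sum>j\<le>n. coeff g j * (a ^ j * c ^ (n - j)))" by (rule coeff_phi_top)
  also have "\<dots> = (\<Sum>j\<le>n. c ^ n * (coeff g j * (a / c) ^ j))"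
  proof (rule sum.cong)
    fix j assume "j \<in> {..n}"
    then have "c ^ n = c ^ j * c ^ (n - j)" by (simp flip: power_add)
    then show "coeff g j * (a ^ j * c ^ (n - j)) = c ^ n * (coeff g j * (a / c) ^ j)"
      using c0 by (simp add: power_divide field_simps)
  qed simp
  also have "\<dots> = c ^ n * poly g (a / c)" by (simp add: poly_sum_le[OF deg] sum_distrib_left)
  finally show ?thesis .
qed

lemma approx_deg:
  fixes g :: "complex poly"
  assumes deg: "degree g \<le> n" and g0: "g \<noteq> 0"
  shows "\<exists>G. cconv G g \<and> (\<forall>k. degree (G k) = n \<and> G k \<noteq> 0 \<and>
            (\<forall>w. poly (G k) w = 0 \<longrightarrow> poly g w = 0 \<or> Im w = 0))"
proof -
  define e where "e = (\<lambda>k::nat. complex_of_real (inverse (real (Suc k))))"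
  have e0: "e \<longlonglongrightarrow> 0" unfolding e_def
    using tendsto_of_real[OF LIMSEQ_inverse_real_of_nat, where 'a=complex] by simp
  have ene: "e k \<noteq> 0" for k unfolding e_def using of_nat_neq_0[of k, where 'a=complex] by simp
  define G where "G = (\<lambda>k. g * [:1, e k:] ^ (n - degree g))"
  have "cconv G (g * [:1, 0:] ^ (n - degree g))"
    unfolding G_def by (intro cconv_mult cconv_const cconv_power cconv_pCons2 e0 tendsto_const)
  then have cc: "cconv G g" unfolding pw2 by simp
  have props: "degree (G k) = n \<and> G k \<noteq> 0 \<and> (\<forall>w. poly (G k) w = 0 \<longrightarrow> poly g w = 0 \<or> Im w = 0)" for k
  proof (intro conjI allI impI)
    have l0: "[:1, e k:] \<noteq> 0" by simp
    have dl: "degree [:1, e k:] = 1" using ene[of k] by simp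
    have "degree (G k) = degree g + degree ([:1, e k:] ^ (n - degree g))"
      unfolding G_def by (rule degree_mult_eq) (use g0 l0 in auto)
    also have "degree ([:1, e k:] ^ (n - degree g)) = n - degree g"
      using dl by (simp add: degree_power_eq)
    finally show "degree (G k) = n" using deg by simp
    show "G k \<noteq> 0" unfolding G_def using g0 l0 by simp
    fix w assume "poly (G k) w = 0"
    then have "poly g w = 0 \<or> 1 + w * e k = 0" unfolding G_def by auto
    moreover have "Im w = 0" if h: "1 + w * e k = 0"
    proof -
      define eps where "eps = inverse (real (Suc k))"
      have epos: "eps > 0" unfolding eps_def by simp
      have "Im (1 + w * complex_of_real eps) = Im w * eps" by simp
      then have "Im (1 + w * e k) = Im w * eps" unfolding e_def eps_def by simp
      then show ?thesis using h epos by simp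
    qed
    ultimately show "poly g w = 0 \<or> Im w = 0" by blast
  qed
  show ?thesis using cc props by blast
qed

lemma stable_UHP: "stable_on upper_half_plane h \<longleftrightarrow> h \<noteq> 0 \<and> (\<forall>w. Im w > 0 \<longrightarrow> poly h w \<noteq> 0)"
  unfolding stable_on_def upper_half_plane_def by auto

lemma zeros_in_R2: "h \<in> zeros_in (complex_of_real ` UNIV) \<longleftrightarrow>
   h \<noteq> 0 \<and> (\<forall>w. Im w > 0 \<longrightarrow> poly h w \<noteq> 0) \<and> (\<forall>w. Im w < 0 \<longrightarrow> poly h w \<noteq> 0)"
  unfolding zeros_in_R by (metis linorder_neqE_linordered_idom less_irrefl)

definition Sop :: "(complex poly \<Rightarrow> complex poly) \<Rightarrow> nat \<Rightarrow> nat \<Rightarrow> complex \<Rightarrow> complex \<Rightarrow> complex \<Rightarrow> complex \<Rightarrow> complex poly \<Rightarrow> complex poly" where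
  "Sop T n m a b c d f = phi_inv m a b c d (T (phi n a b c d f))"



context
  fixes T :: "complex poly \<Rightarrow> complex poly" and n m :: nat and a b c d :: complex
  assumes T_add: "\<And>f g. degree f \<le> n \<Longrightarrow> degree g \<le> n \<Longrightarrow> T (f + g) = T f + T g"
    and T_smult: "\<And>f s. degree f \<le> n \<Longrightarrow> T (smult s f) = smult s (T f)"
    and T_deg: "\<And>f. degree f \<le> n \<Longrightarrow> degree (T f) \<le> m"
    and det: "a * d - b * c \<noteq> 0"
begin

lemma S_props:
  assumes "degree g \<le> n"
  shows "degree (Sop T n m a b c d g) \<le> m" "phi m a b c d (Sop T n m a b c d g) = T (phi n a b c d g)"
proof -
  have "degree (T (phi n a b c d g)) \<le> m" by (rule T_deg[OF degree_phi])
  then show "degree (Sop T n m a b c d g) \<le> m" "phi m a b c d (Sop T n m a b c d g) = T (phi n a b c d g)"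
    unfolding Sop_def using phi_phi_inv[OF det] by auto
qed

lemma S_add:
  assumes f: "degree f \<le> n" and g: "degree g \<le> n"
  shows "Sop T n m a b c d (f + g) = Sop T n m a b c d f + Sop T n m a b c d g"
proof (rule phi_inj[OF det])
  have fg: "degree (f + g) \<le> n" using f g by (simp add: degree_add_le)
  show "degree (Sop T n m a b c d (f + g)) \<le> m" by (rule S_props(1)[OF fg])
  show "degree (Sop T n m a b c d f + Sop T n m a b c d g) \<le> m"
    using S_props(1)[OF f] S_props(1)[OF g] by (simp add: degree_add_le)
  show "phi m a b c d (Sop T n m a b c d (f + g)) = phi m a b c d (Sop T n m a b c d f + Sop T n m a b c d g)"
    unfolding phi_add S_props(2)[OF fg] S_props(2)[OF f] S_props(2)[OF g] phi_add
    by (rule T_add[OF degree_phi degree_phi])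
qed

lemma S_smult:
  assumes f: "degree f \<le> n"
  shows "Sop T n m a b c d (smult s f) = smult s (Sop T n m a b c d f)"
proof (rule phi_inj[OF det])
  have fs: "degree (smult s f) \<le> n" using f by (simp add: order_trans[OF degree_smult_le])
  show "degree (Sop T n m a b c d (smult s f)) \<le> m" by (rule S_props(1)[OF fs])
  show "degree (smult s (Sop T n m a b c d f)) \<le> m"
    using S_props(1)[OF f] by (simp add: order_trans[OF degree_smult_le])
  show "phi m a b c d (Sop T n m a b c d (smult s f)) = phi m a b c d (smult s (Sop T n m a b c d f))"
    unfolding phi_smult S_props(2)[OF fs] S_props(2)[OF f] phi_smult
    by (rule T_smult[OF degree_phi])
qed

lemma S_cconv:
  assumes "\<And>k. degree (G k) \<le> n" "degree g \<le> n" "cconv G g"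
  shows "cconv (\<lambda>k. Sop T n m a b c d (G k)) (Sop T n m a b c d g)"
  by (rule lin_cconv[OF S_add S_smult assms])

lemma L_nz:
  assumes m_max: "\<exists>f. degree f \<le> n \<and> degree (T f) = m"
    and c0: "c \<noteq> 0" and g: "degree g \<le> n" and Sg: "Sop T n m a b c d g \<noteq> 0"
  shows "\<exists>h0. degree h0 \<le> n \<and> poly (Sop T n m a b c d h0) (a / c) \<noteq> 0"
proof -
  obtain f0 where f0: "degree f0 \<le> n" "degree (T f0) = m" using m_max by blast
  obtain h0 where h0: "degree h0 \<le> n" "T (phi n a b c d h0) \<noteq> 0" "degree (T (phi n a b c d h0)) = m"
  proof (cases "T f0 = 0")
    case False
    define h where "h = phi_inv n a b c d f0"
    have "degree h \<le> n" "phi n a b c d h = f0" unfolding h_def using phi_phi_inv[OF det f0(1)] by auto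
    then show ?thesis using that False f0(2) by auto
  next
    case True
    then have m0: "m = 0" using f0(2) by simp
    have "phi m a b c d (Sop T n m a b c d g) \<noteq> 0"
      using phi_eq0_iff[OF det S_props(1)[OF g]] Sg by simp
    then have ne: "T (phi n a b c d g) \<noteq> 0" using S_props(2)[OF g] by simp
    have "degree (T (phi n a b c d g)) = m" using T_deg[OF degree_phi] m0 by simp
    then show ?thesis using that g ne by blast
  qed
  have "coeff (T (phi n a b c d h0)) m \<noteq> 0" using h0(2,3) by auto
  then have "coeff (phi m a b c d (Sop T n m a b c d h0)) m \<noteq> 0" using S_props(2)[OF h0(1)] by simp
  then have "c ^ m * poly (Sop T n m a b c d h0) (a / c) \<noteq> 0"
    using top_c[OF c0 S_props(1)[OF h0(1)]] by simp
  then show ?thesis using h0(1) by auto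
qed

lemma part2:
  "(\<forall>f. degree f = n \<and> stable_on upper_half_plane f
          \<longrightarrow> stable_on upper_half_plane (Sop T n m a b c d f) \<or> Sop T n m a b c d f = 0)
   \<longleftrightarrow> (\<forall>f. degree f \<le> n \<and> stable_on upper_half_plane f
          \<longrightarrow> stable_on upper_half_plane (Sop T n m a b c d f) \<or> Sop T n m a b c d f = 0)"
proof
  assume A: "\<forall>f. degree f = n \<and> stable_on upper_half_plane f
          \<longrightarrow> stable_on upper_half_plane (Sop T n m a b c d f) \<or> Sop T n m a b c d f = 0"
  show "\<forall>f. degree f \<le> n \<and> stable_on upper_half_plane f
          \<longrightarrow> stable_on upper_half_plane (Sop T n m a b c d f) \<or> Sop T n m a b c d f = 0"
  proof (intro allI impI)
    fix g assume g: "degree g \<le> n \<and> stable_on upper_half_plane g"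
    then have g0: "g \<noteq> 0" and gH: "\<forall>w. Im w > 0 \<longrightarrow> poly g w \<noteq> 0" unfolding stable_UHP by auto
    obtain G where G: "cconv G g" "\<And>k. degree (G k) = n" "\<And>k. G k \<noteq> 0"
      "\<And>k w. poly (G k) w = 0 \<Longrightarrow> poly g w = 0 \<or> Im w = 0"
      using approx_deg[of g n] g g0 by blast
    have GH: "stable_on upper_half_plane (G k)" for k
      unfolding stable_UHP using G(3,4) gH by (metis less_irrefl)
    have each: "Sop T n m a b c d (G k) = 0 \<or> (\<forall>z\<in>{z. 0 < Im z}. poly (Sop T n m a b c d (G k)) z \<noteq> 0)" for k
      using A G(2) GH unfolding stable_UHP by auto
    have cc: "cconv (\<lambda>k. Sop T n m a b c d (G k)) (Sop T n m a b c d g)"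
      by (rule S_cconv) (use G g in auto)
    have dS: "\<And>k. degree (Sop T n m a b c d (G k)) \<le> m" using S_props(1) G(2) by auto
    have dg: "degree (Sop T n m a b c d g) \<le> m" using S_props(1) g by auto
    have "Sop T n m a b c d g = 0 \<or> (\<forall>z\<in>{z. 0 < Im z}. poly (Sop T n m a b c d g) z \<noteq> 0)"
      by (rule hurwitz_poly0[OF open_halfspace_Im_gt connected_halfspace_Im_gt cc dS dg each])
    then show "stable_on upper_half_plane (Sop T n m a b c d g) \<or> Sop T n m a b c d g = 0"
      unfolding stable_UHP by auto
  qed
qed auto

lemma part4:
  "(\<forall>f. degree f = n \<and> f \<in> zeros_in (complex_of_real ` UNIV)
          \<longrightarrow> Sop T n m a b c d f \<in> zeros_in (complex_of_real ` UNIV) \<union> {0})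
   \<longleftrightarrow> (\<forall>f. degree f \<le> n \<and> f \<in> zeros_in (complex_of_real ` UNIV)
          \<longrightarrow> Sop T n m a b c d f \<in> zeros_in (complex_of_real ` UNIV) \<union> {0})"
proof
  assume A: "\<forall>f. degree f = n \<and> f \<in> zeros_in (complex_of_real ` UNIV)
          \<longrightarrow> Sop T n m a b c d f \<in> zeros_in (complex_of_real ` UNIV) \<union> {0}"
  show "\<forall>f. degree f \<le> n \<and> f \<in> zeros_in (complex_of_real ` UNIV)
          \<longrightarrow> Sop T n m a b c d f \<in> zeros_in (complex_of_real ` UNIV) \<union> {0}"
  proof (intro allI impI)
    fix g assume g: "degree g \<le> n \<and> g \<in> zeros_in (complex_of_real ` UNIV)"
    then have g0: "g \<noteq> 0" and gR: "\<forall>w. poly g w = 0 \<longrightarrow> Im w = 0" unfolding zeros_in_R by auto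
    obtain G where G: "cconv G g" "\<And>k. degree (G k) = n" "\<And>k. G k \<noteq> 0"
      "\<And>k w. poly (G k) w = 0 \<Longrightarrow> poly g w = 0 \<or> Im w = 0"
      using approx_deg[of g n] g g0 by blast
    have GR: "G k \<in> zeros_in (complex_of_real ` UNIV)" for k
    proof -
      have "\<forall>w. poly (G k) w = 0 \<longrightarrow> Im w = 0"
      proof (intro allI impI)
        fix w assume "poly (G k) w = 0"
        then have "poly g w = 0 \<or> Im w = 0" by (rule G(4))
        then show "Im w = 0" using gR by blast
      qed
      then show ?thesis unfolding zeros_in_R using G(3) by blast
    qed
    have each: "Sop T n m a b c d (G k) = 0 \<or> (\<forall>w. Im w > 0 \<longrightarrow> poly (Sop T n m a b c d (G k)) w \<noteq> 0)
         \<and> (\<forall>w. Im w < 0 \<longrightarrow> poly (Sop T n m a b c d (G k)) w \<noteq> 0)" for k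
    proof -
      have "degree (G k) = n \<and> G k \<in> zeros_in (complex_of_real ` UNIV)" using G(2) GR by blast
      then have "Sop T n m a b c d (G k) \<in> zeros_in (complex_of_real ` UNIV) \<union> {0}"
        using A by blast
      then show ?thesis unfolding Un_iff zeros_in_R2 by blast
    qed
    have cc: "cconv (\<lambda>k. Sop T n m a b c d (G k)) (Sop T n m a b c d g)"
      by (rule S_cconv) (use G g in auto)
    have dS: "\<And>k. degree (Sop T n m a b c d (G k)) \<le> m" using S_props(1) G(2) by auto
    have dg: "degree (Sop T n m a b c d g) \<le> m" using S_props(1) g by auto
    have "Sop T n m a b c d g = 0 \<or> (\<forall>z\<in>{z. 0 < Im z}. poly (Sop T n m a b c d g) z \<noteq> 0)"
    proof (rule hurwitz_poly0[OF open_halfspace_Im_gt connected_halfspace_Im_gt cc dS dg])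
      fix k show "Sop T n m a b c d (G k) = 0 \<or> (\<forall>z\<in>{z. 0 < Im z}. poly (Sop T n m a b c d (G k)) z \<noteq> 0)"
        using each[of k] by blast
    qed
    moreover have "Sop T n m a b c d g = 0 \<or> (\<forall>z\<in>{z. Im z < 0}. poly (Sop T n m a b c d g) z \<noteq> 0)"
    proof (rule hurwitz_poly0[OF open_halfspace_Im_lt connected_halfspace_Im_lt cc dS dg])
      fix k show "Sop T n m a b c d (G k) = 0 \<or> (\<forall>z\<in>{z. Im z < 0}. poly (Sop T n m a b c d (G k)) z \<noteq> 0)"
        using each[of k] by blast
    qed
    ultimately show "Sop T n m a b c d g \<in> zeros_in (complex_of_real ` UNIV) \<union> {0}"
      unfolding Un_iff zeros_in_R2 singleton_iff by blast
  qed
qed auto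


lemma S_limit:
  assumes g: "degree g \<le> n" and dG: "\<And>k. degree (G k) \<le> n" and cc: "cconv G g"
    and each: "\<And>k. Sop T n m a b c d (G k) = 0 \<or> (\<forall>w. Im w * \<sigma> > 0 \<longrightarrow> poly (Sop T n m a b c d (G k)) w \<noteq> 0)"
    and sig: "\<sigma> = 1 \<or> \<sigma> = -1"
  shows "Sop T n m a b c d g = 0 \<or> (\<forall>w. Im w * \<sigma> > 0 \<longrightarrow> poly (Sop T n m a b c d g) w \<noteq> 0)"
proof -
  have cS: "cconv (\<lambda>k. Sop T n m a b c d (G k)) (Sop T n m a b c d g)" by (rule S_cconv[OF dG g cc])
  have dS: "\<And>k. degree (Sop T n m a b c d (G k)) \<le> m" using S_props(1)[OF dG] by blast
  have dg: "degree (Sop T n m a b c d g) \<le> m" using S_props(1)[OF g] by blast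
  have op: "open {w. Im w * \<sigma> > 0}" and cn: "connected {w. Im w * \<sigma> > 0}"
    using sig by (auto simp: open_halfspace_Im_gt open_halfspace_Im_lt connected_halfspace_Im_gt connected_halfspace_Im_lt)
  have "Sop T n m a b c d g = 0 \<or> (\<forall>z\<in>{w. Im w * \<sigma> > 0}. poly (Sop T n m a b c d g) z \<noteq> 0)"
  proof (rule hurwitz_poly0[OF op cn cS dS dg])
    fix k show "Sop T n m a b c d (G k) = 0 \<or> (\<forall>z\<in>{w. Im w * \<sigma> > 0}. poly (Sop T n m a b c d (G k)) z \<noteq> 0)"
      using each[of k] by blast
  qed
  then show ?thesis by blast
qed

lemma ball_iff:
  assumes "\<And>g. P g \<Longrightarrow> (A g \<longleftrightarrow> A' g)" "\<And>g. P g \<Longrightarrow> (B g \<longleftrightarrow> B' g)"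
  shows "(\<forall>g. P g \<and> A g \<longrightarrow> B g) \<longleftrightarrow> (\<forall>g. P g \<and> A' g \<longrightarrow> B' g)"
  using assms by blast

lemma reindex:
  "(\<forall>f. degree f = n \<and> Q f \<longrightarrow> R f) \<longleftrightarrow>
   (\<forall>g. degree g \<le> n \<and> degree (phi n a b c d g) = n \<and> Q (phi n a b c d g) \<longrightarrow> R (phi n a b c d g))"
proof
  assume A: "\<forall>f. degree f = n \<and> Q f \<longrightarrow> R f"
  then show "\<forall>g. degree g \<le> n \<and> degree (phi n a b c d g) = n \<and> Q (phi n a b c d g) \<longrightarrow> R (phi n a b c d g)"
    by blast
next
  assume B: "\<forall>g. degree g \<le> n \<and> degree (phi n a b c d g) = n \<and> Q (phi n a b c d g) \<longrightarrow> R (phi n a b c d g)"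
  show "\<forall>f. degree f = n \<and> Q f \<longrightarrow> R f"
  proof (intro allI impI)
    fix f assume f: "degree f = n \<and> Q f"
    define g where "g = phi_inv n a b c d f"
    have "phi n a b c d g = f" "degree g \<le> n" unfolding g_def using phi_phi_inv[OF det] f by auto
    then show "R f" using B f by metis
  qed
qed

lemma deg_coeff:
  fixes f :: "complex poly"
  assumes "degree f \<le> k"
  shows "(degree f = k \<and> f \<noteq> 0) \<longleftrightarrow> coeff f k \<noteq> 0"
proof
  assume "coeff f k \<noteq> 0"
  then have "f \<noteq> 0" "k \<le> degree f" by (auto intro: le_degree)
  then show "degree f = k \<and> f \<noteq> 0" using assms by simp
qed auto

lemma top_equiv:
  assumes g: "degree g \<le> n"
  shows "c = 0 \<Longrightarrow> coeff (phi n a b c d g) n \<noteq> 0 \<longleftrightarrow> coeff g n \<noteq> 0"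
    and "c \<noteq> 0 \<Longrightarrow> coeff (phi n a b c d g) n \<noteq> 0 \<longleftrightarrow> poly g (a / c) \<noteq> 0"
proof -
  assume c0: "c = 0"
  then have a0: "a \<noteq> 0" using det by simp
  have "coeff (phi n a b c d g) n = coeff g n * a ^ n"
    unfolding coeff_phi_top c0 by (rule top_c0)
  then show "coeff (phi n a b c d g) n \<noteq> 0 \<longleftrightarrow> coeff g n \<noteq> 0" using a0 by simp
next
  assume c0: "c \<noteq> 0"
  show "coeff (phi n a b c d g) n \<noteq> 0 \<longleftrightarrow> poly g (a / c) \<noteq> 0"
    using top_c[OF c0 g] c0 by simp
qed

lemma L_lin:
  shows "\<And>f g. degree f \<le> n \<Longrightarrow> degree g \<le> n \<Longrightarrow>
      poly (Sop T n m a b c d (f + g)) z = poly (Sop T n m a b c d f) z + poly (Sop T n m a b c d g) z"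
    and "\<And>f s. degree f \<le> n \<Longrightarrow> poly (Sop T n m a b c d (smult s f)) z = s * poly (Sop T n m a b c d f) z"
  by (simp_all add: S_add S_smult)

lemma part1:
  assumes m_max: "\<exists>f. degree f \<le> n \<and> degree (T f) = m"
    and hpc: "c \<noteq> 0 \<Longrightarrow> Im (a / c) \<noteq> 0"
  shows "(\<forall>f. degree f = n \<and> stable_on (circ_dom a b c d) f
            \<longrightarrow> stable_on (circ_dom a b c d) (T f) \<or> T f = 0)
     \<longleftrightarrow> (\<forall>f. degree f \<le> n \<and> stable_on upper_half_plane f
            \<longrightarrow> stable_on upper_half_plane (Sop T n m a b c d f) \<or> Sop T n m a b c d f = 0)"
    (is "?I \<longleftrightarrow> ?III")
proof -
  let ?S = "Sop T n m a b c d"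
  define NZ where "NZ = (\<lambda>h. \<forall>w. Im w > 0 \<and> (c = 0 \<or> w \<noteq> a / c) \<longrightarrow> poly h w \<noteq> 0)"
  define NZH where "NZH = (\<lambda>h. \<forall>w. Im w > 0 \<longrightarrow> poly h w \<noteq> 0)"
  have e1: "degree (phi n a b c d g) = n \<and> stable_on (circ_dom a b c d) (phi n a b c d g)
      \<longleftrightarrow> coeff (phi n a b c d g) n \<noteq> 0 \<and> NZ g" if g: "degree g \<le> n" for g
  proof -
    have "stable_on (circ_dom a b c d) (phi n a b c d g) \<longleftrightarrow> g \<noteq> 0 \<and> NZ g"
      unfolding NZ_def by (rule stab_transfer[OF det g])
    moreover have "phi n a b c d g \<noteq> 0 \<longleftrightarrow> g \<noteq> 0" using phi_eq0_iff[OF det g] by simp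
    moreover have "(degree (phi n a b c d g) = n \<and> phi n a b c d g \<noteq> 0) \<longleftrightarrow> coeff (phi n a b c d g) n \<noteq> 0"
      by (rule deg_coeff[OF degree_phi])
    ultimately show ?thesis by blast
  qed
  have e2: "stable_on (circ_dom a b c d) (T (phi n a b c d g)) \<or> T (phi n a b c d g) = 0
      \<longleftrightarrow> ?S g = 0 \<or> NZ (?S g)" if g: "degree g \<le> n" for g
  proof -
    have "stable_on (circ_dom a b c d) (phi m a b c d (?S g)) \<longleftrightarrow> ?S g \<noteq> 0 \<and> NZ (?S g)"
      unfolding NZ_def by (rule stab_transfer[OF det S_props(1)[OF g]])
    moreover have "phi m a b c d (?S g) = 0 \<longleftrightarrow> ?S g = 0" by (rule phi_eq0_iff[OF det S_props(1)[OF g]])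
    ultimately show ?thesis unfolding S_props(2)[OF g] by blast
  qed
  have I': "?I \<longleftrightarrow> (\<forall>g. degree g \<le> n \<and> coeff (phi n a b c d g) n \<noteq> 0 \<and> NZ g \<longrightarrow> ?S g = 0 \<or> NZ (?S g))"
    unfolding reindex by (rule ball_iff[OF e1 e2])
  have III': "?III \<longleftrightarrow> (\<forall>g. degree g \<le> n \<and> g \<noteq> 0 \<and> NZH g \<longrightarrow> ?S g = 0 \<or> NZH (?S g))"
    by (rule ball_iff) (auto simp: stable_UHP NZH_def)
  show ?thesis
  proof (cases "c = 0")
    case True
    have "NZ = NZH" unfolding NZ_def NZH_def using True by simp
    have "?I \<longleftrightarrow> (\<forall>g. degree g \<le> n \<and> coeff g n \<noteq> 0 \<and> NZH g \<longrightarrow> ?S g = 0 \<or> NZH (?S g))"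
      unfolding I' \<open>NZ = NZH\<close> by (rule ball_iff) (use top_equiv(1)[OF _ True] in auto)
    also have "\<dots> \<longleftrightarrow> (\<forall>f. degree f = n \<and> stable_on upper_half_plane f
          \<longrightarrow> stable_on upper_half_plane (?S f) \<or> ?S f = 0)"
      unfolding stable_UHP NZH_def
    proof (intro iffI allI impI)
      fix f assume A: "\<forall>g. degree g \<le> n \<and> coeff g n \<noteq> 0 \<and> (\<forall>w. 0 < Im w \<longrightarrow> poly g w \<noteq> 0) \<longrightarrow>
          ?S g = 0 \<or> (\<forall>w. 0 < Im w \<longrightarrow> poly (?S g) w \<noteq> 0)"
        and f: "degree f = n \<and> f \<noteq> 0 \<and> (\<forall>w. 0 < Im w \<longrightarrow> poly f w \<noteq> 0)"
      then have "coeff f n \<noteq> 0" by auto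
      then show "?S f \<noteq> 0 \<and> (\<forall>w. 0 < Im w \<longrightarrow> poly (?S f) w \<noteq> 0) \<or> ?S f = 0" using A f by auto
    next
      fix g assume A: "\<forall>f. degree f = n \<and> f \<noteq> 0 \<and> (\<forall>w. 0 < Im w \<longrightarrow> poly f w \<noteq> 0) \<longrightarrow>
          ?S f \<noteq> 0 \<and> (\<forall>w. 0 < Im w \<longrightarrow> poly (?S f) w \<noteq> 0) \<or> ?S f = 0"
        and g: "degree g \<le> n \<and> coeff g n \<noteq> 0 \<and> (\<forall>w. 0 < Im w \<longrightarrow> poly g w \<noteq> 0)"
      then have "degree g = n \<and> g \<noteq> 0" using deg_coeff[of g n] by blast
      then show "?S g = 0 \<or> (\<forall>w. 0 < Im w \<longrightarrow> poly (?S g) w \<noteq> 0)" using A g by blast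
    qed
    also have "\<dots> \<longleftrightarrow> ?III" by (rule part2)
    finally show ?thesis .
  next
    case False
    have imne: "Im (a / c) \<noteq> 0" using hpc False by blast
    have I'': "?I \<longleftrightarrow> (\<forall>g. degree g \<le> n \<and> poly g (a / c) \<noteq> 0 \<and> NZ g \<longrightarrow> ?S g = 0 \<or> NZ (?S g))"
      unfolding I' by (rule ball_iff) (use top_equiv(2)[OF _ False] in auto)
    show ?thesis
    proof (cases "Im (a / c) < 0")
      case True
      have nzeq: "NZ h \<longleftrightarrow> NZH h" for h
      proof
        assume "NZ h"
        then show "NZH h" unfolding NZ_def NZH_def using True by fastforce
      qed (auto simp: NZ_def NZH_def)
      show ?thesis
      proof
        assume A: ?I
        show ?III unfolding III'
        proof (intro allI impI)
          fix g assume g: "degree g \<le> n \<and> g \<noteq> 0 \<and> NZH g"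
          have add: "\<And>f h. degree f \<le> n \<Longrightarrow> degree h \<le> n \<Longrightarrow> poly (f + h) (a / c) = poly f (a / c) + poly h (a / c)"
            by simp
          have sm: "\<And>f s. degree f \<le> n \<Longrightarrow> poly (smult s f) (a / c) = s * poly f (a / c)" by simp
          obtain G where G: "cconv G g" "\<And>k. degree (G k) \<le> n" "\<And>k. poly (G k) (a / c) \<noteq> 0"
            "\<And>\<sigma> k w. (\<forall>w. Im w * \<sigma> > 0 \<longrightarrow> poly g w \<noteq> 0) \<Longrightarrow> Im w * \<sigma> > 0 \<Longrightarrow> poly (G k) w \<noteq> 0"
          proof -
            have h01: "degree (1::complex poly) \<le> n" "poly 1 (a / c) \<noteq> 0" by simp_all
            have g1: "degree g \<le> n" "g \<noteq> 0" using g by auto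
            show ?thesis using approx_pert[where L="\<lambda>h. poly h (a / c)" and n=n, OF add sm h01 g1] that by blast
          qed
          have gH: "\<forall>w. Im w * 1 > 0 \<longrightarrow> poly g w \<noteq> 0" using g unfolding NZH_def by simp
          have each: "?S (G k) = 0 \<or> (\<forall>w. Im w * 1 > 0 \<longrightarrow> poly (?S (G k)) w \<noteq> 0)" for k
          proof -
            have "NZH (G k)" unfolding NZH_def using G(4)[OF gH] by simp
            then have "degree (G k) \<le> n \<and> poly (G k) (a / c) \<noteq> 0 \<and> NZ (G k)" using nzeq G(2,3) by blast
            then have "?S (G k) = 0 \<or> NZ (?S (G k))"
              using A[unfolded I''] by blast
            then have "?S (G k) = 0 \<or> NZH (?S (G k))" using nzeq by blast
            then show ?thesis unfolding NZH_def by simp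
          qed
          have "?S g = 0 \<or> (\<forall>w. Im w * 1 > 0 \<longrightarrow> poly (?S g) w \<noteq> 0)"
            by (rule S_limit[OF _ G(2) G(1) each]) (use g in auto)
          then show "?S g = 0 \<or> NZH (?S g)" unfolding NZH_def by simp
        qed
      next
        assume B: ?III
        show ?I unfolding I''
        proof (intro allI impI)
          fix g assume g: "degree g \<le> n \<and> poly g (a / c) \<noteq> 0 \<and> NZ g"
          then have "degree g \<le> n \<and> g \<noteq> 0 \<and> NZH g" using nzeq by auto
          then have "?S g = 0 \<or> NZH (?S g)" using B[unfolded III'] by blast
          then show "?S g = 0 \<or> NZ (?S g)" using nzeq by blast
        qed
      qed
    next
      case False
      then have ipos: "Im (a / c) > 0" using imne by simp
      have nzh: "poly h (a / c) \<noteq> 0 \<and> NZ h \<longleftrightarrow> NZH h" for h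
      proof
        assume h: "poly h (a / c) \<noteq> 0 \<and> NZ h"
        show "NZH h" unfolding NZH_def
        proof (intro allI impI)
          fix w assume w: "Im w > 0"
          show "poly h w \<noteq> 0"
          proof (cases "w = a / c")
            case True then show ?thesis using h by simp
          next
            case False then show ?thesis using h w unfolding NZ_def by blast
          qed
        qed
      next
        assume "NZH h"
        then show "poly h (a / c) \<noteq> 0 \<and> NZ h" unfolding NZ_def NZH_def using ipos by blast
      qed
      show ?thesis
      proof
        assume A: ?I
        show ?III unfolding III'
        proof (intro allI impI)
          fix g assume g: "degree g \<le> n \<and> g \<noteq> 0 \<and> NZH g"
          show "?S g = 0 \<or> NZH (?S g)"
          proof (cases "?S g = 0")
            case False
            obtain h0 where h0: "degree h0 \<le> n" "poly (?S h0) (a / c) \<noteq> 0"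
              using L_nz[OF m_max \<open>c \<noteq> 0\<close> _ False] g by blast
            obtain G where G: "cconv G g" "\<And>k. degree (G k) \<le> n" "\<And>k. poly (?S (G k)) (a / c) \<noteq> 0"
              "\<And>\<sigma> k w. (\<forall>w. Im w * \<sigma> > 0 \<longrightarrow> poly g w \<noteq> 0) \<Longrightarrow> Im w * \<sigma> > 0 \<Longrightarrow> poly (G k) w \<noteq> 0"
            proof -
              have g1: "degree g \<le> n" "g \<noteq> 0" using g by auto
              show ?thesis using approx_pert[where L="\<lambda>h. poly (?S h) (a / c)" and n=n, OF L_lin h0 g1] that by blast
            qed
            have gH: "\<forall>w. Im w * 1 > 0 \<longrightarrow> poly g w \<noteq> 0" using g unfolding NZH_def by simp
            have each: "?S (G k) = 0 \<or> (\<forall>w. Im w * 1 > 0 \<longrightarrow> poly (?S (G k)) w \<noteq> 0)" for k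
            proof -
              have "NZH (G k)" unfolding NZH_def using G(4)[OF gH] by simp
              then have "degree (G k) \<le> n \<and> poly (G k) (a / c) \<noteq> 0 \<and> NZ (G k)" using nzh G(2) by blast
              then have "?S (G k) = 0 \<or> NZ (?S (G k))"
                using A[unfolded I''] by blast
              moreover have "?S (G k) \<noteq> 0" using G(3)[of k] by auto
              ultimately have "NZH (?S (G k))" using nzh G(3)[of k] by blast
              then show ?thesis unfolding NZH_def by simp
            qed
            have "?S g = 0 \<or> (\<forall>w. Im w * 1 > 0 \<longrightarrow> poly (?S g) w \<noteq> 0)"
              by (rule S_limit[OF _ G(2) G(1) each]) (use g in auto)
            then show "?S g = 0 \<or> NZH (?S g)" unfolding NZH_def by simp
          qed simp
        qed
      next
        assume B: ?III
        show ?I unfolding I''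
        proof (intro allI impI)
          fix g assume g: "degree g \<le> n \<and> poly g (a / c) \<noteq> 0 \<and> NZ g"
          have g0: "g \<noteq> 0" using g by auto
          have "NZH g" using nzh g by blast
          then have "degree g \<le> n \<and> g \<noteq> 0 \<and> NZH g" using g g0 by blast
          then have "?S g = 0 \<or> NZH (?S g)" using B[unfolded III'] by blast
          then show "?S g = 0 \<or> NZ (?S g)" using nzh by blast
        qed
      qed
    qed
  qed
qed


lemma part3:
  assumes m_max: "\<exists>f. degree f \<le> n \<and> degree (T f) = m"
    and hpc: "c \<noteq> 0 \<Longrightarrow> Im (a / c) \<noteq> 0"
  shows "(\<forall>f. degree f = n \<and> f \<in> zeros_in (frontier (circ_dom a b c d))
            \<longrightarrow> T f \<in> zeros_in (frontier (circ_dom a b c d)) \<union> {0})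
     \<longleftrightarrow> (\<forall>f. degree f \<le> n \<and> f \<in> zeros_in (complex_of_real ` UNIV)
            \<longrightarrow> Sop T n m a b c d f \<in> zeros_in (complex_of_real ` UNIV) \<union> {0})"
    (is "?IV \<longleftrightarrow> ?VI")
proof -
  let ?S = "Sop T n m a b c d"
  let ?F = "frontier (circ_dom a b c d)"
  define RZ where "RZ = (\<lambda>h. \<forall>w. poly h w = 0 \<and> (c = 0 \<or> w \<noteq> a / c) \<longrightarrow> Im w = 0)"
  define RR where "RR = (\<lambda>h. \<forall>w. poly h w = 0 \<longrightarrow> Im w = (0::real))"
  have e1: "degree (phi n a b c d g) = n \<and> phi n a b c d g \<in> zeros_in ?F
      \<longleftrightarrow> coeff (phi n a b c d g) n \<noteq> 0 \<and> RZ g" if g: "degree g \<le> n" for g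
  proof -
    have "phi n a b c d g \<in> zeros_in ?F \<longleftrightarrow> g \<noteq> 0 \<and> RZ g"
      unfolding RZ_def by (rule zeros_transfer[OF det g])
    moreover have "phi n a b c d g \<noteq> 0 \<longleftrightarrow> g \<noteq> 0" using phi_eq0_iff[OF det g] by simp
    moreover have "(degree (phi n a b c d g) = n \<and> phi n a b c d g \<noteq> 0) \<longleftrightarrow> coeff (phi n a b c d g) n \<noteq> 0"
      by (rule deg_coeff[OF degree_phi])
    ultimately show ?thesis by blast
  qed
  have e2: "T (phi n a b c d g) \<in> zeros_in ?F \<union> {0} \<longleftrightarrow> ?S g = 0 \<or> RZ (?S g)"
    if g: "degree g \<le> n" for g
  proof -
    have "phi m a b c d (?S g) \<in> zeros_in ?F \<longleftrightarrow> ?S g \<noteq> 0 \<and> RZ (?S g)"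
      unfolding RZ_def by (rule zeros_transfer[OF det S_props(1)[OF g]])
    moreover have "phi m a b c d (?S g) = 0 \<longleftrightarrow> ?S g = 0" by (rule phi_eq0_iff[OF det S_props(1)[OF g]])
    ultimately show ?thesis unfolding S_props(2)[OF g] Un_iff singleton_iff by blast
  qed
  have IV': "?IV \<longleftrightarrow> (\<forall>g. degree g \<le> n \<and> (coeff (phi n a b c d g) n \<noteq> 0 \<and> RZ g) \<longrightarrow> ?S g = 0 \<or> RZ (?S g))"
    unfolding reindex by (rule ball_iff[OF e1 e2])
  have zR: "h \<in> zeros_in (complex_of_real ` UNIV) \<longleftrightarrow> h \<noteq> 0 \<and> RR h" for h
    unfolding zeros_in_R RR_def ..
  have VI': "?VI \<longleftrightarrow> (\<forall>g. degree g \<le> n \<and> (g \<noteq> 0 \<and> RR g) \<longrightarrow> ?S g = 0 \<or> RR (?S g))"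
    by (rule ball_iff) (auto simp: zR)
  show ?thesis
  proof (cases "c = 0")
    case True
    have rzr: "RZ h \<longleftrightarrow> RR h" for h unfolding RZ_def RR_def using True by simp
    have "?IV \<longleftrightarrow> (\<forall>g. degree g \<le> n \<and> (coeff g n \<noteq> 0 \<and> RR g) \<longrightarrow> ?S g = 0 \<or> RR (?S g))"
      unfolding IV' by (rule ball_iff) (use top_equiv(1)[OF _ True] rzr in auto)
    also have "\<dots> \<longleftrightarrow> (\<forall>f. degree f = n \<and> f \<in> zeros_in (complex_of_real ` UNIV)
          \<longrightarrow> ?S f \<in> zeros_in (complex_of_real ` UNIV) \<union> {0})"
    proof (intro iffI allI impI)
      fix f assume A: "\<forall>g. degree g \<le> n \<and> (coeff g n \<noteq> 0 \<and> RR g) \<longrightarrow> ?S g = 0 \<or> RR (?S g)"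
        and f: "degree f = n \<and> f \<in> zeros_in (complex_of_real ` UNIV)"
      then have "degree f \<le> n \<and> (coeff f n \<noteq> 0 \<and> RR f)" using zR by auto
      then have "?S f = 0 \<or> RR (?S f)" using A by blast
      then show "?S f \<in> zeros_in (complex_of_real ` UNIV) \<union> {0}" unfolding Un_iff singleton_iff zR by blast
    next
      fix g assume A: "\<forall>f. degree f = n \<and> f \<in> zeros_in (complex_of_real ` UNIV)
          \<longrightarrow> ?S f \<in> zeros_in (complex_of_real ` UNIV) \<union> {0}"
        and g: "degree g \<le> n \<and> (coeff g n \<noteq> 0 \<and> RR g)"
      then have "degree g = n \<and> g \<noteq> 0" using deg_coeff[of g n] by blast
      then have "degree g = n \<and> g \<in> zeros_in (complex_of_real ` UNIV)" using g zR by blast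
      then have "?S g \<in> zeros_in (complex_of_real ` UNIV) \<union> {0}" using A by blast
      then show "?S g = 0 \<or> RR (?S g)" unfolding Un_iff singleton_iff zR by blast
    qed
    also have "\<dots> \<longleftrightarrow> ?VI" by (rule part4)
    finally show ?thesis .
  next
    case False
    have imne: "Im (a / c) \<noteq> 0" using hpc False by blast
    have rz: "(poly g (a / c) \<noteq> 0 \<and> RZ g) \<longleftrightarrow> (g \<noteq> 0 \<and> RR g)" for g
    proof
      assume h: "poly g (a / c) \<noteq> 0 \<and> RZ g"
      have "RR g" unfolding RR_def
      proof (intro allI impI)
        fix w assume w: "poly g w = 0"
        then have "w \<noteq> a / c" using h by auto
        then show "Im w = 0" using h w unfolding RZ_def by blast
      qed
      then show "g \<noteq> 0 \<and> RR g" using h by auto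
    next
      assume h: "g \<noteq> 0 \<and> RR g"
      have "poly g (a / c) \<noteq> 0" using h imne unfolding RR_def by blast
      moreover have "RZ g" using h unfolding RZ_def RR_def by blast
      ultimately show "poly g (a / c) \<noteq> 0 \<and> RZ g" by blast
    qed
    have IV'': "?IV \<longleftrightarrow> (\<forall>g. degree g \<le> n \<and> (g \<noteq> 0 \<and> RR g) \<longrightarrow> ?S g = 0 \<or> RZ (?S g))"
      unfolding IV' by (rule ball_iff) (use top_equiv(2)[OF _ False] rz in auto)
    have rrz: "RR h \<Longrightarrow> RZ h" for h unfolding RR_def RZ_def by blast
    show ?thesis
    proof
      assume A: ?IV
      show ?VI unfolding VI'
      proof (intro allI impI)
        fix g assume g: "degree g \<le> n \<and> (g \<noteq> 0 \<and> RR g)"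
        show "?S g = 0 \<or> RR (?S g)"
        proof (cases "?S g = 0")
          case False
          obtain h0 where h0: "degree h0 \<le> n" "poly (?S h0) (a / c) \<noteq> 0"
            using L_nz[OF m_max \<open>c \<noteq> 0\<close> _ False] g by blast
          have g1: "degree g \<le> n" "g \<noteq> 0" using g by auto
          have exG: "\<exists>G. cconv G g \<and> (\<forall>k. degree (G k) \<le> n) \<and> (\<forall>k. poly (?S (G k)) (a / c) \<noteq> 0) \<and> (\<forall>k. G k \<noteq> 0)
              \<and> (\<forall>\<sigma>. (\<forall>w. Im w * \<sigma> > 0 \<longrightarrow> poly g w \<noteq> 0) \<longrightarrow> (\<forall>k w. Im w * \<sigma> > 0 \<longrightarrow> poly (G k) w \<noteq> 0))"
            using approx_pert[where L="\<lambda>h. poly (?S h) (a / c)" and n=n, OF L_lin h0 g1] by simp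
          then obtain G where G: "cconv G g" "\<forall>k. degree (G k) \<le> n" "\<forall>k. poly (?S (G k)) (a / c) \<noteq> 0"
            "\<forall>k. G k \<noteq> 0"
            "\<forall>\<sigma>. (\<forall>w. Im w * \<sigma> > 0 \<longrightarrow> poly g w \<noteq> 0) \<longrightarrow> (\<forall>k w. Im w * \<sigma> > 0 \<longrightarrow> poly (G k) w \<noteq> 0)"
            by blast
          have gs1: "\<forall>w. Im w * (1::real) > 0 \<longrightarrow> poly g w \<noteq> 0"
            using g unfolding RR_def by fastforce
          have gs2: "\<forall>w. Im w * (-1::real) > 0 \<longrightarrow> poly g w \<noteq> 0"
            using g unfolding RR_def by fastforce
          have Gs1: "\<forall>k w. Im w * (1::real) > 0 \<longrightarrow> poly (G k) w \<noteq> 0"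
            using G(5) gs1 by blast
          have Gs2: "\<forall>k w. Im w * (-1::real) > 0 \<longrightarrow> poly (G k) w \<noteq> 0"
            using G(5) gs2 by blast
          have RRG: "RR (G k)" for k
            unfolding RR_def
          proof (intro allI impI)
            fix w assume w: "poly (G k) w = 0"
            have "\<not> Im w * 1 > 0" using Gs1 w by blast
            moreover have "\<not> Im w * (-1) > 0" using Gs2 w by blast
            ultimately show "Im w = 0" by simp
          qed
          have RRS: "RR (?S (G k))" for k
          proof -
            have "degree (G k) \<le> n \<and> (G k \<noteq> 0 \<and> RR (G k))" using G(2,4) RRG by blast
            then have "?S (G k) = 0 \<or> RZ (?S (G k))" using A[unfolded IV''] by blast
            moreover have "poly (?S (G k)) (a / c) \<noteq> 0" using G(3) by blast
            ultimately have "poly (?S (G k)) (a / c) \<noteq> 0 \<and> RZ (?S (G k))" by auto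
            then show ?thesis using rz by blast
          qed
          have each: "?S (G k) = 0 \<or> (\<forall>w. Im w * \<sigma> > 0 \<longrightarrow> poly (?S (G k)) w \<noteq> 0)" for k \<sigma>
            using RRS[of k] unfolding RR_def by fastforce
          have dG: "\<And>k. degree (G k) \<le> n" using G(2) by blast
          have l1: "?S g = 0 \<or> (\<forall>w. Im w * 1 > 0 \<longrightarrow> poly (?S g) w \<noteq> 0)"
            by (rule S_limit[OF g1(1) dG G(1) each]) simp
          have l2: "?S g = 0 \<or> (\<forall>w. Im w * (-1) > 0 \<longrightarrow> poly (?S g) w \<noteq> 0)"
            by (rule S_limit[OF g1(1) dG G(1) each]) simp
          have "RR (?S g)" unfolding RR_def
          proof (intro allI impI)
            fix w assume w: "poly (?S g) w = 0"
            have "\<not> Im w * 1 > 0" using l1 w False by blast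
            moreover have "\<not> Im w * (-1) > 0" using l2 w False by blast
            ultimately show "Im w = 0" by simp
          qed
          then show ?thesis by blast
        qed simp
      qed
    next
      assume B: ?VI
      show ?IV unfolding IV''
      proof (intro allI impI)
        fix g assume g: "degree g \<le> n \<and> (g \<noteq> 0 \<and> RR g)"
        then have "?S g = 0 \<or> RR (?S g)" using B[unfolded VI'] by blast
        then show "?S g = 0 \<or> RZ (?S g)" using rrz by blast
      qed
    qed
  qed
qed

end


theorem mainTheorem17:
  fixes T :: "complex poly \<Rightarrow> complex poly" and n m :: nat and a b c d :: complex
  assumes T_add: "\<And>f g. degree f \<le> n \<Longrightarrow> degree g \<le> n \<Longrightarrow> T (f + g) = T f + T g"
    and T_smult: "\<And>f s. degree f \<le> n \<Longrightarrow> T (smult s f) = smult s (T f)"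
    and T_deg: "\<And>f. degree f \<le> n \<Longrightarrow> degree (T f) \<le> m"
    and m_max: "\<exists>f. degree f \<le> n \<and> degree (T f) = m"
    and det: "a * d - b * c \<noteq> 0"
    and hp: "is_open_halfplane (circ_dom a b c d) \<longrightarrow> c = 0"
  defines "C \<equiv> circ_dom a b c d"
    and "S \<equiv> (\<lambda>f. phi_inv m a b c d (T (phi n a b c d f)))"
  shows "((\<forall>f. degree f = n \<and> stable_on C f \<longrightarrow> stable_on C (T f) \<or> T f = 0)
            \<longleftrightarrow> (\<forall>f. degree f = n \<and> stable_on upper_half_plane f
                     \<longrightarrow> stable_on upper_half_plane (S f) \<or> S f = 0))
       \<and> ((\<forall>f. degree f = n \<and> stable_on upper_half_plane f
                     \<longrightarrow> stable_on upper_half_plane (S f) \<or> S f = 0)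
            \<longleftrightarrow> (\<forall>f. degree f \<le> n \<and> stable_on upper_half_plane f
                     \<longrightarrow> stable_on upper_half_plane (S f) \<or> S f = 0))
       \<and> ((\<forall>f. degree f = n \<and> f \<in> zeros_in (frontier C) \<longrightarrow> T f \<in> zeros_in (frontier C) \<union> {0})
            \<longleftrightarrow> (\<forall>f. degree f = n \<and> f \<in> zeros_in (complex_of_real ` UNIV)
                     \<longrightarrow> S f \<in> zeros_in (complex_of_real ` UNIV) \<union> {0}))
       \<and> ((\<forall>f. degree f = n \<and> f \<in> zeros_in (complex_of_real ` UNIV)
                     \<longrightarrow> S f \<in> zeros_in (complex_of_real ` UNIV) \<union> {0})
            \<longleftrightarrow> (\<forall>f. degree f \<le> n \<and> f \<in> zeros_in (complex_of_real ` UNIV)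
                     \<longrightarrow> S f \<in> zeros_in (complex_of_real ` UNIV) \<union> {0}))"
  proof -
  have detne: "a * d - b * c \<noteq> 0" using det .
  have hpc: "Im (a / c) \<noteq> 0" if c0: "c \<noteq> 0"
  proof
    assume "Im (a / c) = 0"
    then have "is_open_halfplane (circ_dom a b c d)" by (rule halfplane_case[OF det c0])
    then show False using hp c0 by blast
  qed
  have SS: "S = Sop T n m a b c d" unfolding S_def by (rule ext) (simp add: Sop_def)
  note P1 = part1[OF T_add T_smult T_deg det m_max hpc]
  note P2 = part2[OF T_add T_smult T_deg det]
  note P3 = part3[OF T_add T_smult T_deg det m_max hpc]
  note P4 = part4[OF T_add T_smult T_deg det]
  show ?thesis unfolding C_def SS using P1 P2 P3 P4 by blast
qed

end
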